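(* There is an isomorphism of categories between $\mathsf{CSet}\text{-}\mathsf{Cat}$ and $\mathsf{Cat}^{\mathsf{D}}$.
   Context: Convex sets: algebras $(X,\pi^X:D(X)\to X)$ over the distribution monad $D$ on $\mathsf{Set}$ over $\mathbb{R}_{\ge0}$ ($D(X)$ = finitely supported $p:X\to\mathbb{R}_{\ge0}$ with $\sum p(x)=1$, $D(f)$ pushforward, multiplication $\mu(P)(x)=\sum_qP(q)q(x)$, unit Dirac delta); write $\sum_i\alpha_ix_i$ for $\pi^X$ of a formal convex combination; $\mathsf{CSet}$ is the category of convex sets and convex maps. For convex sets $X,Y,Z$, a map $f:X\times Y\to Z$ is biconvex if $f(\sum_i\alpha_ix_i,\sum_j\beta_jy_j)=\sum_{i,j}\alpha_i\beta_jf(x_i,y_j)$. The convex tensor product $X\otimes Y$ is the convex set corepresenting biconvex maps out of $X\times Y$ (via $(x,y)\mapsto x\otimes y$); $(\mathsf{CSet},\otimes,\mathbf{1})$ is a symmetric monoidal category with unit the one-point convex set. $\mathsf{CSet}\text{-}\mathsf{Cat}$ is the category of small categories enriched in $(\mathsf{CSet},\otimes,\mathbf{1})$ and enriched functors. $\mathsf{Cat}^{\mathsf{D}}$ is the category of algebras over the distribution monad $\mathsf{D}$ on $\mathsf{Cat}$ of Kharoof–Okay; concretely, an object is a small category together with a convex-set structure on each hom-set such that the composition maps are biconvex, and a morphism is a functor that preserves the convex structure on hom-sets. *)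

theory Defs
  imports Complex_Main "HOL-Library.FuncSet"
begin

section \<open>The finite distribution monad D on Set (over nonnegative reals)\<close>

definition supp :: "('x \<Rightarrow> real) \<Rightarrow> 'x set" where
  "supp p = {x. p x \<noteq> 0}"

definition Dist :: "'x set \<Rightarrow> ('x \<Rightarrow> real) set" where
  "Dist A = {p. (\<forall>x. 0 \<le> p x) \<and> finite (supp p) \<and> supp p \<subseteq> A \<and> sum p (supp p) = 1}"

definition delta :: "'x \<Rightarrow> 'x \<Rightarrow> real" where
  "delta x = (\<lambda>y. if y = x then 1 else 0)"

definition Dmap :: "('x \<Rightarrow> 'y) \<Rightarrow> ('x \<Rightarrow> real) \<Rightarrow> ('y \<Rightarrow> real)" where
  "Dmap f p = (\<lambda>y. \<Sum>x\<in>supp p. if f x = y then p x else 0)"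

definition Dmu :: "(('x \<Rightarrow> real) \<Rightarrow> real) \<Rightarrow> ('x \<Rightarrow> real)" where
  "Dmu P = (\<lambda>x. \<Sum>q\<in>supp P. P q * q x)"

section \<open>Convex sets (D-algebras), convex and biconvex maps\<close>

record 'x cset =
  carr :: "'x set"
  bary :: "('x \<Rightarrow> real) \<Rightarrow> 'x"

definition convex_set :: "'x cset \<Rightarrow> bool" where
  "convex_set X \<longleftrightarrow>
     (\<forall>p\<in>Dist (carr X). bary X p \<in> carr X) \<and>
     (\<forall>x\<in>carr X. bary X (delta x) = x) \<and>
     (\<forall>P\<in>Dist (Dist (carr X)). bary X (Dmu P) = bary X (Dmap (bary X) P))"

definition convex_map :: "'x cset \<Rightarrow> 'y cset \<Rightarrow> ('x \<Rightarrow> 'y) \<Rightarrow> bool" where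
  "convex_map X Y f \<longleftrightarrow>
     (\<forall>x\<in>carr X. f x \<in> carr Y) \<and>
     (\<forall>p\<in>Dist (carr X). f (bary X p) = bary Y (Dmap f p))"

definition prodist :: "('x \<Rightarrow> real) \<Rightarrow> ('y \<Rightarrow> real) \<Rightarrow> ('x \<times> 'y \<Rightarrow> real)" where
  "prodist p q = (\<lambda>(x, y). p x * q y)"

definition biconvex :: "'x cset \<Rightarrow> 'y cset \<Rightarrow> 'z cset \<Rightarrow> ('x \<Rightarrow> 'y \<Rightarrow> 'z) \<Rightarrow> bool" where
  "biconvex X Y Z f \<longleftrightarrow>
     (\<forall>x\<in>carr X. \<forall>y\<in>carr Y. f x y \<in> carr Z) \<and>
     (\<forall>p\<in>Dist (carr X). \<forall>q\<in>Dist (carr Y).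
        f (bary X p) (bary Y q) = bary Z (Dmap (\<lambda>(x, y). f x y) (prodist p q)))"

text \<open>Congruences of a D-algebra (kernels of algebra maps).\<close>
definition cset_congruence :: "'x cset \<Rightarrow> ('x \<times> 'x) set \<Rightarrow> bool" where
  "cset_congruence X R \<longleftrightarrow> equiv (carr X) R \<and>
     (\<forall>P\<in>Dist (carr X). \<forall>Q\<in>Dist (carr X).
        Dmap (\<lambda>x. R `` {x}) P = Dmap (\<lambda>x. R `` {x}) Q \<longrightarrow> (bary X P, bary X Q) \<in> R)"

definition free_cset :: "'x set \<Rightarrow> ('x \<Rightarrow> real) cset" where
  "free_cset A = \<lparr>carr = Dist A, bary = Dmu\<rparr>"

definition tensor_gens :: "'x cset \<Rightarrow> 'y cset \<Rightarrow> (('x \<times> 'y \<Rightarrow> real) \<times> ('x \<times> 'y \<Rightarrow> real)) set" where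
  "tensor_gens X Y =
     {(delta (bary X p, y), Dmap (\<lambda>x. (x, y)) p) | p y. p \<in> Dist (carr X) \<and> y \<in> carr Y} \<union>
     {(delta (x, bary Y q), Dmap (\<lambda>y. (x, y)) q) | x q. x \<in> carr X \<and> q \<in> Dist (carr Y)}"

text \<open>Smallest congruence on D(X x Y) making (x,y) |-> [delta(x,y)] biconvex.\<close>
definition tensor_rel :: "'x cset \<Rightarrow> 'y cset \<Rightarrow> (('x \<times> 'y \<Rightarrow> real) \<times> ('x \<times> 'y \<Rightarrow> real)) set" where
  "tensor_rel X Y = \<Inter>{R. cset_congruence (free_cset (carr X \<times> carr Y)) R \<and> tensor_gens X Y \<subseteq> R}"

definition tensor :: "'x cset \<Rightarrow> 'y cset \<Rightarrow> (('x \<times> 'y \<Rightarrow> real) set) cset" where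
  "tensor X Y = \<lparr>carr = Dist (carr X \<times> carr Y) // tensor_rel X Y,
                 bary = (\<lambda>P. tensor_rel X Y `` {Dmu (Dmap (\<lambda>c. SOME q. q \<in> c) P)})\<rparr>"

definition tens :: "'x cset \<Rightarrow> 'y cset \<Rightarrow> 'x \<Rightarrow> 'y \<Rightarrow> ('x \<times> 'y \<Rightarrow> real) set" where
  "tens X Y x y = tensor_rel X Y `` {delta (x, y)}"

definition unitC :: "unit cset" where
  "unitC = \<lparr>carr = {()}, bary = (\<lambda>_. ())\<rparr>"

definition idm :: "'x cset \<Rightarrow> 'x \<Rightarrow> 'x" where
  "idm X = restrict id (carr X)"

definition tmap :: "'a cset \<Rightarrow> 'b cset \<Rightarrow> 'c cset \<Rightarrow> 'd cset \<Rightarrow> ('a \<Rightarrow> 'c) \<Rightarrow> ('b \<Rightarrow> 'd)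
    \<Rightarrow> ('a \<times> 'b \<Rightarrow> real) set \<Rightarrow> ('c \<times> 'd \<Rightarrow> real) set" where
  "tmap X Y X' Y' f g = (THE h. h \<in> extensional (carr (tensor X Y)) \<and>
      convex_map (tensor X Y) (tensor X' Y') h \<and>
      (\<forall>x\<in>carr X. \<forall>y\<in>carr Y. h (tens X Y x y) = tens X' Y' (f x) (g y)))"

definition assocm :: "'a cset \<Rightarrow> 'b cset \<Rightarrow> 'c cset
    \<Rightarrow> (('a \<times> 'b \<Rightarrow> real) set \<times> 'c \<Rightarrow> real) set \<Rightarrow> ('a \<times> ('b \<times> 'c \<Rightarrow> real) set \<Rightarrow> real) set" where
  "assocm X Y Z = (THE h. h \<in> extensional (carr (tensor (tensor X Y) Z)) \<and>
      convex_map (tensor (tensor X Y) Z) (tensor X (tensor Y Z)) h \<and>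
      (\<forall>x\<in>carr X. \<forall>y\<in>carr Y. \<forall>z\<in>carr Z.
         h (tens (tensor X Y) Z (tens X Y x y) z) = tens X (tensor Y Z) x (tens Y Z y z)))"

definition lunit :: "'a cset \<Rightarrow> (unit \<times> 'a \<Rightarrow> real) set \<Rightarrow> 'a" where
  "lunit X = (THE h. h \<in> extensional (carr (tensor unitC X)) \<and>
      convex_map (tensor unitC X) X h \<and> (\<forall>x\<in>carr X. h (tens unitC X () x) = x))"

definition runit :: "'a cset \<Rightarrow> ('a \<times> unit \<Rightarrow> real) set \<Rightarrow> 'a" where
  "runit X = (THE h. h \<in> extensional (carr (tensor X unitC)) \<and>
      convex_map (tensor X unitC) X h \<and> (\<forall>x\<in>carr X. h (tens X unitC x ()) = x))"

record ('o, 'h) ecat =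
  eOb :: "'o set"
  eHom :: "'o \<Rightarrow> 'o \<Rightarrow> 'h set"
  eBary :: "'o \<Rightarrow> 'o \<Rightarrow> ('h \<Rightarrow> real) \<Rightarrow> 'h"
  eM :: "'o \<Rightarrow> 'o \<Rightarrow> 'o \<Rightarrow> ('h \<times> 'h \<Rightarrow> real) set \<Rightarrow> 'h"  \<comment> \<open>M_abc : C(b,c) (x) C(a,b) -> C(a,c)\<close>
  eJ :: "'o \<Rightarrow> unit \<Rightarrow> 'h"                               \<comment> \<open>j_a : 1 -> C(a,a)\<close>

definition ehom :: "('o, 'h, 'z) ecat_scheme \<Rightarrow> 'o \<Rightarrow> 'o \<Rightarrow> 'h cset" where
  "ehom E a b = \<lparr>carr = eHom E a b, bary = eBary E a b\<rparr>"

definition is_ecat :: "('o, 'h) ecat \<Rightarrow> bool" where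
  "is_ecat E \<longleftrightarrow>
    (\<forall>a\<in>eOb E. \<forall>b\<in>eOb E. convex_set (ehom E a b)) \<and>
    (\<forall>a\<in>eOb E. \<forall>b\<in>eOb E. \<forall>c\<in>eOb E.
        convex_map (tensor (ehom E b c) (ehom E a b)) (ehom E a c) (eM E a b c)) \<and>
    (\<forall>a\<in>eOb E. convex_map unitC (ehom E a a) (eJ E a)) \<and>
    \<comment> \<open>associativity: M o (M (x) 1) = M o (1 (x) M) o alpha\<close>
    (\<forall>a\<in>eOb E. \<forall>b\<in>eOb E. \<forall>c\<in>eOb E. \<forall>d\<in>eOb E.
       \<forall>t\<in>carr (tensor (tensor (ehom E c d) (ehom E b c)) (ehom E a b)).
         eM E a b d (tmap (tensor (ehom E c d) (ehom E b c)) (ehom E a b) (ehom E b d) (ehom E a b)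
                        (eM E b c d) (idm (ehom E a b)) t)
       = eM E a c d (tmap (ehom E c d) (tensor (ehom E b c) (ehom E a b)) (ehom E c d) (ehom E a c)
                        (idm (ehom E c d)) (eM E a b c)
                        (assocm (ehom E c d) (ehom E b c) (ehom E a b) t))) \<and>
    \<comment> \<open>left unit: M o (j (x) 1) = lambda\<close>
    (\<forall>a\<in>eOb E. \<forall>b\<in>eOb E. \<forall>t\<in>carr (tensor unitC (ehom E a b)).
         eM E a b b (tmap unitC (ehom E a b) (ehom E b b) (ehom E a b) (eJ E b) (idm (ehom E a b)) t)
       = lunit (ehom E a b) t) \<and>
    \<comment> \<open>right unit: M o (1 (x) j) = rho\<close>
    (\<forall>a\<in>eOb E. \<forall>b\<in>eOb E. \<forall>t\<in>carr (tensor (ehom E a b) unitC).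
         eM E a a b (tmap (ehom E a b) unitC (ehom E a b) (ehom E a a) (idm (ehom E a b)) (eJ E a) t)
       = runit (ehom E a b) t) \<and>
    \<comment> \<open>extensionality (the structure maps carry no data outside their domains)\<close>
    (\<forall>a b c t. \<not> (a \<in> eOb E \<and> b \<in> eOb E \<and> c \<in> eOb E \<and>
                   t \<in> carr (tensor (ehom E b c) (ehom E a b))) \<longrightarrow> eM E a b c t = undefined) \<and>
    (\<forall>a. a \<notin> eOb E \<longrightarrow> eJ E a = (\<lambda>_. undefined))"

definition is_efun :: "('o, 'h) ecat \<Rightarrow> ('o, 'h) ecat \<Rightarrow> ('o \<Rightarrow> 'o) \<Rightarrow> ('o \<Rightarrow> 'o \<Rightarrow> 'h \<Rightarrow> 'h) \<Rightarrow> bool" where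
  "is_efun E E' Fo Fh \<longleftrightarrow>
    (\<forall>a\<in>eOb E. Fo a \<in> eOb E') \<and>
    (\<forall>a\<in>eOb E. \<forall>b\<in>eOb E. convex_map (ehom E a b) (ehom E' (Fo a) (Fo b)) (Fh a b)) \<and>
    (\<forall>a\<in>eOb E. \<forall>b\<in>eOb E. \<forall>c\<in>eOb E. \<forall>t\<in>carr (tensor (ehom E b c) (ehom E a b)).
       Fh a c (eM E a b c t)
       = eM E' (Fo a) (Fo b) (Fo c)
           (tmap (ehom E b c) (ehom E a b) (ehom E' (Fo b) (Fo c)) (ehom E' (Fo a) (Fo b))
                 (Fh b c) (Fh a b) t)) \<and>
    (\<forall>a\<in>eOb E. Fh a a (eJ E a ()) = eJ E' (Fo a) ()) \<and>
    (\<forall>a. a \<notin> eOb E \<longrightarrow> Fo a = undefined) \<and>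
    (\<forall>a b f. \<not> (a \<in> eOb E \<and> b \<in> eOb E \<and> f \<in> eHom E a b) \<longrightarrow> Fh a b f = undefined)"

section \<open>Algebras over the distribution monad on Cat\<close>

record ('o, 'h) dcat =
  dOb :: "'o set"
  dHom :: "'o \<Rightarrow> 'o \<Rightarrow> 'h set"
  dBary :: "'o \<Rightarrow> 'o \<Rightarrow> ('h \<Rightarrow> real) \<Rightarrow> 'h"
  dComp :: "'o \<Rightarrow> 'o \<Rightarrow> 'o \<Rightarrow> 'h \<Rightarrow> 'h \<Rightarrow> 'h"   \<comment> \<open>dComp a b c g f = g o f\<close>
  dId :: "'o \<Rightarrow> 'h"

definition dhom :: "('o, 'h, 'z) dcat_scheme \<Rightarrow> 'o \<Rightarrow> 'o \<Rightarrow> 'h cset" where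
  "dhom C a b = \<lparr>carr = dHom C a b, bary = dBary C a b\<rparr>"

definition is_dcat :: "('o, 'h) dcat \<Rightarrow> bool" where
  "is_dcat C \<longleftrightarrow>
    (\<forall>a\<in>dOb C. \<forall>b\<in>dOb C. convex_set (dhom C a b)) \<and>
    (\<forall>a\<in>dOb C. \<forall>b\<in>dOb C. \<forall>c\<in>dOb C. \<forall>g\<in>dHom C b c. \<forall>f\<in>dHom C a b.
       dComp C a b c g f \<in> dHom C a c) \<and>
    (\<forall>a\<in>dOb C. dId C a \<in> dHom C a a) \<and>
    (\<forall>a\<in>dOb C. \<forall>b\<in>dOb C. \<forall>f\<in>dHom C a b.
       dComp C a b b (dId C b) f = f \<and> dComp C a a b f (dId C a) = f) \<and>
    (\<forall>a\<in>dOb C. \<forall>b\<in>dOb C. \<forall>c\<in>dOb C. \<forall>d\<in>dOb C.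
       \<forall>f\<in>dHom C a b. \<forall>g\<in>dHom C b c. \<forall>h\<in>dHom C c d.
       dComp C a c d h (dComp C a b c g f) = dComp C a b d (dComp C b c d h g) f) \<and>
    (\<forall>a\<in>dOb C. \<forall>b\<in>dOb C. \<forall>c\<in>dOb C.
       biconvex (dhom C b c) (dhom C a b) (dhom C a c) (dComp C a b c)) \<and>
    (\<forall>a b c g f. \<not> (a \<in> dOb C \<and> b \<in> dOb C \<and> c \<in> dOb C \<and> g \<in> dHom C b c \<and> f \<in> dHom C a b)
       \<longrightarrow> dComp C a b c g f = undefined) \<and>
    (\<forall>a. a \<notin> dOb C \<longrightarrow> dId C a = undefined)"

definition is_dfun :: "('o, 'h) dcat \<Rightarrow> ('o, 'h) dcat \<Rightarrow> ('o \<Rightarrow> 'o) \<Rightarrow> ('o \<Rightarrow> 'o \<Rightarrow> 'h \<Rightarrow> 'h) \<Rightarrow> bool" where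
  "is_dfun C C' Fo Fh \<longleftrightarrow>
    (\<forall>a\<in>dOb C. Fo a \<in> dOb C') \<and>
    (\<forall>a\<in>dOb C. \<forall>b\<in>dOb C. \<forall>f\<in>dHom C a b. Fh a b f \<in> dHom C' (Fo a) (Fo b)) \<and>
    (\<forall>a\<in>dOb C. \<forall>b\<in>dOb C. \<forall>c\<in>dOb C. \<forall>g\<in>dHom C b c. \<forall>f\<in>dHom C a b.
       Fh a c (dComp C a b c g f) = dComp C' (Fo a) (Fo b) (Fo c) (Fh b c g) (Fh a b f)) \<and>
    (\<forall>a\<in>dOb C. Fh a a (dId C a) = dId C' (Fo a)) \<and>
    (\<forall>a\<in>dOb C. \<forall>b\<in>dOb C. convex_map (dhom C a b) (dhom C' (Fo a) (Fo b)) (Fh a b)) \<and>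
    (\<forall>a. a \<notin> dOb C \<longrightarrow> Fo a = undefined) \<and>
    (\<forall>a b f. \<not> (a \<in> dOb C \<and> b \<in> dOb C \<and> f \<in> dHom C a b) \<longrightarrow> Fh a b f = undefined)"

record ('ob, 'ar) bigcat =
  cOb :: "'ob set"
  cAr :: "'ar set"
  cDom :: "'ar \<Rightarrow> 'ob"
  cCod :: "'ar \<Rightarrow> 'ob"
  cComp :: "'ar \<Rightarrow> 'ar \<Rightarrow> 'ar"   \<comment> \<open>cComp g f = g o f\<close>
  cId :: "'ob \<Rightarrow> 'ar"

definition is_functor :: "('a, 'b) bigcat \<Rightarrow> ('c, 'd) bigcat \<Rightarrow> ('a \<Rightarrow> 'c) \<Rightarrow> ('b \<Rightarrow> 'd) \<Rightarrow> bool" where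
  "is_functor C D FO FA \<longleftrightarrow>
    (\<forall>x\<in>cOb C. FO x \<in> cOb D) \<and>
    (\<forall>f\<in>cAr C. FA f \<in> cAr D \<and> cDom D (FA f) = FO (cDom C f) \<and> cCod D (FA f) = FO (cCod C f)) \<and>
    (\<forall>x\<in>cOb C. FA (cId C x) = cId D (FO x)) \<and>
    (\<forall>f\<in>cAr C. \<forall>g\<in>cAr C. cCod C f = cDom C g \<longrightarrow> FA (cComp C g f) = cComp D (FA g) (FA f))"

definition cat_iso :: "('a, 'b) bigcat \<Rightarrow> ('c, 'd) bigcat \<Rightarrow> bool" where
  "cat_iso C D \<longleftrightarrow> (\<exists>FO FA GO GA. is_functor C D FO FA \<and> is_functor D C GO GA \<and>
     (\<forall>x\<in>cOb C. GO (FO x) = x) \<and> (\<forall>f\<in>cAr C. GA (FA f) = f) \<and>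
     (\<forall>y\<in>cOb D. FO (GO y) = y) \<and> (\<forall>g\<in>cAr D. FA (GA g) = g))"

definition fcomp_o :: "'o set \<Rightarrow> ('o \<Rightarrow> 'o) \<Rightarrow> ('o \<Rightarrow> 'o) \<Rightarrow> 'o \<Rightarrow> 'o" where
  "fcomp_o Ob Go Fo = restrict (Go \<circ> Fo) Ob"

definition fcomp_h :: "'o set \<Rightarrow> ('o \<Rightarrow> 'o \<Rightarrow> 'h set) \<Rightarrow> ('o \<Rightarrow> 'o)
    \<Rightarrow> ('o \<Rightarrow> 'o \<Rightarrow> 'h \<Rightarrow> 'h) \<Rightarrow> ('o \<Rightarrow> 'o \<Rightarrow> 'h \<Rightarrow> 'h) \<Rightarrow> 'o \<Rightarrow> 'o \<Rightarrow> 'h \<Rightarrow> 'h" where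
  "fcomp_h Ob Hom Fo Gh Fh = (\<lambda>a b. if a \<in> Ob \<and> b \<in> Ob
      then restrict (Gh (Fo a) (Fo b) \<circ> Fh a b) (Hom a b) else (\<lambda>_. undefined))"

definition fid_o :: "'o set \<Rightarrow> 'o \<Rightarrow> 'o" where
  "fid_o Ob = restrict id Ob"

definition fid_h :: "'o set \<Rightarrow> ('o \<Rightarrow> 'o \<Rightarrow> 'h set) \<Rightarrow> 'o \<Rightarrow> 'o \<Rightarrow> 'h \<Rightarrow> 'h" where
  "fid_h Ob Hom = (\<lambda>a b. if a \<in> Ob \<and> b \<in> Ob then restrict id (Hom a b) else (\<lambda>_. undefined))"

definition CSetCat :: "(('o, 'h) ecat,
    ('o, 'h) ecat \<times> ('o \<Rightarrow> 'o) \<times> ('o \<Rightarrow> 'o \<Rightarrow> 'h \<Rightarrow> 'h) \<times> ('o, 'h) ecat) bigcat" where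
  "CSetCat = \<lparr>cOb = {E. is_ecat E},
     cAr = {(E, Fo, Fh, E'). is_ecat E \<and> is_ecat E' \<and> is_efun E E' Fo Fh},
     cDom = (\<lambda>(E, Fo, Fh, E'). E),
     cCod = (\<lambda>(E, Fo, Fh, E'). E'),
     cComp = (\<lambda>(E2, Go, Gh, E3) (E1, Fo, Fh, E2').
                (E1, fcomp_o (eOb E1) Go Fo, fcomp_h (eOb E1) (eHom E1) Fo Gh Fh, E3)),
     cId = (\<lambda>E. (E, fid_o (eOb E), fid_h (eOb E) (eHom E), E))\<rparr>"

definition CatD :: "(('o, 'h) dcat,
    ('o, 'h) dcat \<times> ('o \<Rightarrow> 'o) \<times> ('o \<Rightarrow> 'o \<Rightarrow> 'h \<Rightarrow> 'h) \<times> ('o, 'h) dcat) bigcat" where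
  "CatD = \<lparr>cOb = {C. is_dcat C},
     cAr = {(C, Fo, Fh, C'). is_dcat C \<and> is_dcat C' \<and> is_dfun C C' Fo Fh},
     cDom = (\<lambda>(C, Fo, Fh, C'). C),
     cCod = (\<lambda>(C, Fo, Fh, C'). C'),
     cComp = (\<lambda>(C2, Go, Gh, C3) (C1, Fo, Fh, C2').
                (C1, fcomp_o (dOb C1) Go Fo, fcomp_h (dOb C1) (dHom C1) Fo Gh Fh, C3)),
     cId = (\<lambda>C. (C, fid_o (dOb C), fid_h (dOb C) (dHom C), C))\<rparr>"

end

theory Submission
  imports Defs
begin

section \<open>Distributions\<close>

lemma supp_iff: "x \<in> supp p \<longleftrightarrow> p x \<noteq> 0" by (simp add: supp_def)

lemma sum_supp_superset:
  assumes "finite S" "supp p \<subseteq> S"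
  shows "(\<Sum>x\<in>S. p x * g x) = (\<Sum>x\<in>supp p. p x * g x)"
  by (rule sum.mono_neutral_right[OF assms(1) assms(2)]) (auto simp: supp_def)

lemma sum_supp_superset1:
  assumes "finite S" "supp p \<subseteq> S"
  shows "(\<Sum>x\<in>S. p x) = (\<Sum>x\<in>supp p. p x)"
  by (rule sum.mono_neutral_right[OF assms(1) assms(2)]) (auto simp: supp_def)

lemma Dmap_eq:
  assumes "finite S" "supp p \<subseteq> S"
  shows "Dmap f p y = (\<Sum>x\<in>S. if f x = y then p x else 0)"
  unfolding Dmap_def
  by (rule sum.mono_neutral_left[OF assms(1) assms(2)]) (auto simp: supp_def)

lemma supp_Dmap: "supp (Dmap f p) \<subseteq> f ` supp p"
proof
  fix y assume y: "y \<in> supp (Dmap f p)"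
  show "y \<in> f ` supp p"
  proof (rule ccontr)
    assume "y \<notin> f ` supp p"
    then have "\<forall>x\<in>supp p. (if f x = y then p x else 0) = 0" by auto
    then have "Dmap f p y = 0" unfolding Dmap_def by (simp only: sum.neutral)
    with y show False by (simp add: supp_def)
  qed
qed

lemma finite_supp_Dmap: "finite (supp p) \<Longrightarrow> finite (supp (Dmap f p))"
  by (rule finite_subset[OF supp_Dmap finite_imageI])

lemma sum_Dmap:
  assumes fin: "finite (supp p)"
  shows "(\<Sum>y\<in>supp (Dmap f p). Dmap f p y * g y) = (\<Sum>x\<in>supp p. p x * g (f x))"
proof -
  let ?S = "supp p"
  have "(\<Sum>y\<in>supp (Dmap f p). Dmap f p y * g y) = (\<Sum>y\<in>f ` ?S. Dmap f p y * g y)"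
    using sum_supp_superset[OF finite_imageI[OF fin] supp_Dmap, of f g] by simp
  also have "\<dots> = (\<Sum>y\<in>f ` ?S. \<Sum>x\<in>?S. if f x = y then p x * g y else 0)"
    unfolding Dmap_def sum_distrib_right by (intro sum.cong refl) auto
  also have "\<dots> = (\<Sum>x\<in>?S. \<Sum>y\<in>f ` ?S. if f x = y then p x * g y else 0)"
    by (rule sum.swap)
  also have "\<dots> = (\<Sum>x\<in>?S. p x * g (f x))"
    using fin by (simp add: sum.delta)
  finally show ?thesis .
qed

lemma sum_Dmap1:
  assumes fin: "finite (supp p)"
  shows "(\<Sum>y\<in>supp (Dmap f p). Dmap f p y) = (\<Sum>x\<in>supp p. p x)"
  using sum_Dmap[OF fin, of f "\<lambda>_. 1"] by simp

lemma DistD: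
  assumes "p \<in> Dist A"
  shows "\<And>x. 0 \<le> p x" "finite (supp p)" "supp p \<subseteq> A" "sum p (supp p) = 1"
  using assms by (auto simp: Dist_def)

lemma DistI:
  "(\<And>x. 0 \<le> p x) \<Longrightarrow> finite (supp p) \<Longrightarrow> supp p \<subseteq> A \<Longrightarrow> sum p (supp p) = 1 \<Longrightarrow> p \<in> Dist A"
  by (auto simp: Dist_def)

lemma Dist_mono: "p \<in> Dist A \<Longrightarrow> A \<subseteq> B \<Longrightarrow> p \<in> Dist B"
  by (auto simp: Dist_def)

lemma Dist_supp_mem: "p \<in> Dist A \<Longrightarrow> x \<in> supp p \<Longrightarrow> x \<in> A"
  by (auto simp: Dist_def)

lemma supp_delta: "supp (delta x) = {x}"
  by (auto simp: supp_def delta_def)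

lemma delta_Dist: "x \<in> A \<Longrightarrow> delta x \<in> Dist A"
  by (rule DistI) (auto simp: supp_delta, auto simp: delta_def)

lemma Dmap_nonneg: "(\<And>x. 0 \<le> p x) \<Longrightarrow> 0 \<le> Dmap f p y"
  by (auto simp: Dmap_def intro: sum_nonneg)

lemma Dmap_Dist:
  assumes "p \<in> Dist A" "\<And>x. x \<in> A \<Longrightarrow> f x \<in> B"
  shows "Dmap f p \<in> Dist B"
proof (rule DistI)
  show "\<And>x. 0 \<le> Dmap f p x" using DistD(1)[OF assms(1)] by (rule Dmap_nonneg)
  show "finite (supp (Dmap f p))" using DistD(2)[OF assms(1)] by (rule finite_supp_Dmap)
  show "supp (Dmap f p) \<subseteq> B" using supp_Dmap[of f p] DistD(3)[OF assms(1)] assms(2) by blast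
  show "sum (Dmap f p) (supp (Dmap f p)) = 1"
    using sum_Dmap1[OF DistD(2)[OF assms(1)], of f] DistD(4)[OF assms(1)] by simp
qed

lemma Dmap_delta: "Dmap f (delta x) = delta (f x)"
  unfolding Dmap_def supp_delta by (rule ext) (simp add: delta_def eq_commute)

lemma Dmap_cong: "(\<And>x. x \<in> supp p \<Longrightarrow> f x = g x) \<Longrightarrow> Dmap f p = Dmap g p"
  unfolding Dmap_def by (intro ext sum.cong) auto

lemma Dmap_comp:
  assumes "finite (supp p)"
  shows "Dmap g (Dmap f p) = Dmap (\<lambda>x. g (f x)) p"
proof
  fix z
  have "Dmap g (Dmap f p) z = (\<Sum>y\<in>supp (Dmap f p). Dmap f p y * (if g y = z then 1 else 0))"
    by (simp add: Dmap_def if_distrib cong: if_cong)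
  also have "\<dots> = (\<Sum>x\<in>supp p. p x * (if g (f x) = z then 1 else 0))"
    by (rule sum_Dmap[OF assms])
  also have "\<dots> = Dmap (\<lambda>x. g (f x)) p z"
    by (simp add: Dmap_def if_distrib cong: if_cong)
  finally show "Dmap g (Dmap f p) z = Dmap (\<lambda>x. g (f x)) p z" .
qed

lemma Dmap_id:
  assumes "finite (supp p)"
  shows "Dmap (\<lambda>x. x) p = p"
proof
  fix y
  show "Dmap (\<lambda>x. x) p y = p y"
    using assms by (cases "y \<in> supp p") (auto simp: Dmap_def sum.delta' supp_def)
qed

lemma Dmap_const:
  assumes "p \<in> Dist A"
  shows "Dmap (\<lambda>_. c) p = delta c"
proof
  fix y
  show "Dmap (\<lambda>_. c) p y = delta c y"
    using DistD(4)[OF assms] by (auto simp: Dmap_def delta_def)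
qed

lemma Dmu_Dmap:
  assumes "finite (supp p)"
  shows "Dmu (Dmap Q p) x = (\<Sum>y\<in>supp p. p y * Q y x)"
  unfolding Dmu_def by (rule sum_Dmap[OF assms])

lemma Dmu_delta: "Dmu (delta p) = p"
  unfolding Dmu_def supp_delta by (rule ext) (simp add: delta_def)

lemma Dmu_Dmap_delta:
  assumes "finite (supp p)"
  shows "Dmu (Dmap (\<lambda>x. delta (g x)) p) = Dmap g p"
proof
  fix z
  show "Dmu (Dmap (\<lambda>x. delta (g x)) p) z = Dmap g p z"
    unfolding Dmu_Dmap[OF assms] unfolding Dmap_def by (intro sum.cong) (auto simp: delta_def)
qed

lemma Dmu_Dmap_delta0:
  assumes "finite (supp p)"
  shows "Dmu (Dmap delta p) = p"
  using Dmu_Dmap_delta[OF assms, of "\<lambda>x. x"] Dmap_id[OF assms] by simp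


lemma Dmap_alt: "Dmap f p y = (\<Sum>x\<in>supp p. p x * (if f x = y then 1 else 0))"
  unfolding Dmap_def by (intro sum.cong refl) simp

lemma sum_ind_eq:
  fixes p :: "'a \<Rightarrow> real"
  assumes "finite S"
  shows "(\<Sum>x\<in>S. p x * (if x = y then 1 else 0)) = (if y \<in> S then p y else 0)"
proof -
  have "(\<Sum>x\<in>S. p x * (if x = y then 1 else 0)) = (\<Sum>x\<in>S. if x = y then p x else 0)"
    by (intro sum.cong refl) auto
  also have "\<dots> = (if y \<in> S then p y else 0)" using assms by (simp add: sum.delta')
  finally show ?thesis .
qed

lemma sum_supp_ind: "finite (supp p) \<Longrightarrow> (\<Sum>x\<in>supp p. p x * (if x = y then 1 else 0)) = p y"
  by (simp add: sum_ind_eq supp_def)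

lemma supp_Dmu: "supp (Dmu P) \<subseteq> \<Union> (supp ` supp P)"
proof
  fix x assume x: "x \<in> supp (Dmu P)"
  show "x \<in> \<Union> (supp ` supp P)"
  proof (rule ccontr)
    assume "x \<notin> \<Union> (supp ` supp P)"
    then have "\<forall>q\<in>supp P. P q * q x = 0" by (auto simp: supp_def)
    then have "Dmu P x = 0" unfolding Dmu_def by (simp only: sum.neutral)
    with x show False by (simp add: supp_def)
  qed
qed

lemma DistDist_fin:
  assumes "P \<in> Dist (Dist A)"
  shows "finite (\<Union> (supp ` supp P))"
proof (rule finite_Union)
  show "finite (supp ` supp P)" using DistD(2)[OF assms] by (rule finite_imageI)
  show "\<And>M. M \<in> supp ` supp P \<Longrightarrow> finite M"
    using DistD(3)[OF assms] by (auto simp: Dist_def)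
qed

lemma Dmu_Dist:
  assumes P: "P \<in> Dist (Dist A)"
  shows "Dmu P \<in> Dist A"
proof (rule DistI)
  let ?S = "\<Union> (supp ` supp P)"
  have finS: "finite ?S" by (rule DistDist_fin[OF P])
  have qD: "\<And>q. q \<in> supp P \<Longrightarrow> q \<in> Dist A" using DistD(3)[OF P] by auto
  show "\<And>x. 0 \<le> Dmu P x"
    unfolding Dmu_def using DistD(1)[OF P] qD
    by (intro sum_nonneg mult_nonneg_nonneg) (auto dest: DistD(1))
  show fin: "finite (supp (Dmu P))" by (rule finite_subset[OF supp_Dmu finS])
  show "supp (Dmu P) \<subseteq> A" using supp_Dmu[of P] qD by (auto dest: DistD(3))
  have "sum (Dmu P) (supp (Dmu P)) = (\<Sum>x\<in>?S. Dmu P x)"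
    by (rule sum_supp_superset1[OF finS supp_Dmu, symmetric])
  also have "\<dots> = (\<Sum>x\<in>?S. \<Sum>q\<in>supp P. P q * q x)" by (simp add: Dmu_def)
  also have "\<dots> = (\<Sum>q\<in>supp P. P q * (\<Sum>x\<in>?S. q x))"
    by (subst sum.swap) (simp add: sum_distrib_left)
  also have "\<dots> = (\<Sum>q\<in>supp P. P q)"
  proof (intro sum.cong refl)
    fix q assume q: "q \<in> supp P"
    have "(\<Sum>x\<in>?S. q x) = sum q (supp q)"
      by (rule sum_supp_superset1[OF finS]) (use q in blast)
    also have "\<dots> = 1" using qD[OF q] by (rule DistD(4))
    finally show "P q * (\<Sum>x\<in>?S. q x) = P q" by simp
  qed
  also have "\<dots> = 1" by (rule DistD(4)[OF P])
  finally show "sum (Dmu P) (supp (Dmu P)) = 1" .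
qed

lemma Dmap_Dmu:
  assumes P: "P \<in> Dist (Dist A)"
  shows "Dmap f (Dmu P) = Dmu (Dmap (Dmap f) P)"
proof
  fix y
  let ?S = "\<Union> (supp ` supp P)"
  have finS: "finite ?S" by (rule DistDist_fin[OF P])
  have qD: "\<And>q. q \<in> supp P \<Longrightarrow> q \<in> Dist A" using DistD(3)[OF P] by auto
  have "Dmap f (Dmu P) y = (\<Sum>x\<in>?S. if f x = y then Dmu P x else 0)"
    by (rule Dmap_eq[OF finS supp_Dmu])
  also have "\<dots> = (\<Sum>x\<in>?S. \<Sum>q\<in>supp P. P q * (if f x = y then q x else 0))"
    by (intro sum.cong refl) (simp add: Dmu_def)
  also have "\<dots> = (\<Sum>q\<in>supp P. P q * (\<Sum>x\<in>?S. if f x = y then q x else 0))"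
    by (subst sum.swap) (simp add: sum_distrib_left)
  also have "\<dots> = (\<Sum>q\<in>supp P. P q * Dmap f q y)"
  proof (intro sum.cong refl)
    fix q assume q: "q \<in> supp P"
    have "Dmap f q y = (\<Sum>x\<in>?S. if f x = y then q x else 0)"
      by (rule Dmap_eq[OF finS]) (use q in blast)
    then show "P q * (\<Sum>x\<in>?S. if f x = y then q x else 0) = P q * Dmap f q y" by simp
  qed
  also have "\<dots> = Dmu (Dmap (Dmap f) P) y"
    by (rule Dmu_Dmap[OF DistD(2)[OF P], symmetric])
  finally show "Dmap f (Dmu P) y = Dmu (Dmap (Dmap f) P) y" .
qed

lemma Dmu_Dmu:
  assumes PP: "PP \<in> Dist (Dist (Dist A))"
  shows "Dmu (Dmu PP) = Dmu (Dmap Dmu PP)"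
proof
  fix x
  let ?T = "\<Union> (supp ` supp PP)"
  have finT: "finite ?T" by (rule DistDist_fin[OF PP])
  have "Dmu (Dmu PP) x = (\<Sum>q\<in>supp (Dmu PP). Dmu PP q * q x)" by (simp add: Dmu_def)
  also have "\<dots> = (\<Sum>q\<in>?T. Dmu PP q * q x)"
    by (rule sum_supp_superset[OF finT supp_Dmu, symmetric])
  also have "\<dots> = (\<Sum>q\<in>?T. \<Sum>P\<in>supp PP. PP P * (P q * q x))"
    by (intro sum.cong refl) (simp add: Dmu_def sum_distrib_right mult.assoc)
  also have "\<dots> = (\<Sum>P\<in>supp PP. PP P * (\<Sum>q\<in>?T. P q * q x))"
    by (subst sum.swap) (simp add: sum_distrib_left)
  also have "\<dots> = (\<Sum>P\<in>supp PP. PP P * Dmu P x)"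
  proof (intro sum.cong refl)
    fix P assume P: "P \<in> supp PP"
    have "(\<Sum>q\<in>?T. P q * q x) = (\<Sum>q\<in>supp P. P q * q x)"
      by (rule sum_supp_superset[OF finT]) (use P in blast)
    then show "PP P * (\<Sum>q\<in>?T. P q * q x) = PP P * Dmu P x" by (simp add: Dmu_def)
  qed
  also have "\<dots> = Dmu (Dmap Dmu PP) x"
    by (rule Dmu_Dmap[OF DistD(2)[OF PP], symmetric])
  finally show "Dmu (Dmu PP) x = Dmu (Dmap Dmu PP) x" .
qed

lemma prodist_apply[simp]: "prodist p q (x, y) = p x * q y"
  by (simp add: prodist_def)

lemma supp_prodist: "supp (prodist p q) = supp p \<times> supp q"
  by (auto simp: supp_def prodist_def)

lemma sum_prodist:
  assumes "finite (supp p)" "finite (supp q)"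
  shows "(\<Sum>z\<in>supp (prodist p q). prodist p q z * G z) = (\<Sum>x\<in>supp p. \<Sum>y\<in>supp q. p x * q y * G (x, y))"
  unfolding supp_prodist sum.cartesian_product by (intro sum.cong refl) (auto simp: prodist_def)

lemma prodist_Dist:
  assumes p: "p \<in> Dist A" and q: "q \<in> Dist B"
  shows "prodist p q \<in> Dist (A \<times> B)"
proof (rule DistI)
  show "\<And>z. 0 \<le> prodist p q z" using DistD(1)[OF p] DistD(1)[OF q]
    by (auto simp: prodist_def)
  show "finite (supp (prodist p q))" unfolding supp_prodist using DistD(2)[OF p] DistD(2)[OF q] by simp
  show "supp (prodist p q) \<subseteq> A \<times> B" unfolding supp_prodist using DistD(3)[OF p] DistD(3)[OF q] by auto
  have "sum (prodist p q) (supp (prodist p q)) = (\<Sum>z\<in>supp (prodist p q). prodist p q z * 1)" by simp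
  also have "\<dots> = (\<Sum>x\<in>supp p. \<Sum>y\<in>supp q. p x * q y * 1)"
    by (rule sum_prodist[OF DistD(2)[OF p] DistD(2)[OF q]])
  also have "\<dots> = sum p (supp p) * sum q (supp q)" by (simp add: sum_product)
  also have "\<dots> = 1" using DistD(4)[OF p] DistD(4)[OF q] by simp
  finally show "sum (prodist p q) (supp (prodist p q)) = 1" .
qed

lemma Dmap_prodist_alt:
  assumes "finite (supp p)" "finite (supp q)"
  shows "Dmap h (prodist p q) w = (\<Sum>x\<in>supp p. \<Sum>y\<in>supp q. p x * q y * (if h (x, y) = w then 1 else 0))"
  unfolding Dmap_alt by (rule sum_prodist[OF assms])

lemma Dmap_prodist:
  assumes fp: "finite (supp p)" and fq: "finite (supp q)"
  shows "Dmap (\<lambda>(x, y). (f x, g y)) (prodist p q) = prodist (Dmap f p) (Dmap g q)"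
proof
  fix w :: "'c \<times> 'd"
  obtain u v where w: "w = (u, v)" by (cases w)
  have "Dmap (\<lambda>(x, y). (f x, g y)) (prodist p q) w
      = (\<Sum>x\<in>supp p. \<Sum>y\<in>supp q. p x * q y * (if (f x, g y) = (u, v) then 1 else 0))"
    unfolding Dmap_prodist_alt[OF fp fq] w by simp
  also have "\<dots> = (\<Sum>x\<in>supp p. \<Sum>y\<in>supp q. (p x * (if f x = u then 1 else 0)) * (q y * (if g y = v then 1 else 0)))"
    by (intro sum.cong refl) simp
  also have "\<dots> = Dmap f p u * Dmap g q v"
    unfolding Dmap_alt by (simp add: sum_product)
  finally show "Dmap (\<lambda>(x, y). (f x, g y)) (prodist p q) w = prodist (Dmap f p) (Dmap g q) w"
    by (simp add: w)
qed

lemma Fubini1: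
  assumes fr: "finite (supp r)" and fq: "finite (supp q)"
  shows "Dmu (Dmap (\<lambda>a. Dmap (g a) q) r) = Dmap (\<lambda>(a, b). g a b) (prodist r q)"
proof
  fix z
  have "Dmu (Dmap (\<lambda>a. Dmap (g a) q) r) z = (\<Sum>a\<in>supp r. r a * Dmap (g a) q z)"
    by (rule Dmu_Dmap[OF fr])
  also have "\<dots> = (\<Sum>a\<in>supp r. \<Sum>b\<in>supp q. r a * q b * (if g a b = z then 1 else 0))"
    unfolding Dmap_alt by (simp add: sum_distrib_left mult.assoc)
  also have "\<dots> = Dmap (\<lambda>(a, b). g a b) (prodist r q) z"
    unfolding Dmap_prodist_alt[OF fr fq] by simp
  finally show "Dmu (Dmap (\<lambda>a. Dmap (g a) q) r) z = Dmap (\<lambda>(a, b). g a b) (prodist r q) z" .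
qed

lemma Fubini2:
  assumes fr: "finite (supp r)" and fq: "finite (supp q)"
  shows "Dmu (Dmap (\<lambda>b. Dmap (\<lambda>a. g a b) r) q) = Dmap (\<lambda>(a, b). g a b) (prodist r q)"
proof
  fix z
  have "Dmu (Dmap (\<lambda>b. Dmap (\<lambda>a. g a b) r) q) z = (\<Sum>b\<in>supp q. q b * Dmap (\<lambda>a. g a b) r z)"
    by (rule Dmu_Dmap[OF fq])
  also have "\<dots> = (\<Sum>b\<in>supp q. \<Sum>a\<in>supp r. r a * q b * (if g a b = z then 1 else 0))"
    unfolding Dmap_alt by (simp add: sum_distrib_left mult_ac)
  also have "\<dots> = (\<Sum>a\<in>supp r. \<Sum>b\<in>supp q. r a * q b * (if g a b = z then 1 else 0))"
    by (rule sum.swap)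
  also have "\<dots> = Dmap (\<lambda>(a, b). g a b) (prodist r q) z"
    unfolding Dmap_prodist_alt[OF fr fq] by simp
  finally show "Dmu (Dmap (\<lambda>b. Dmap (\<lambda>a. g a b) r) q) z = Dmap (\<lambda>(a, b). g a b) (prodist r q) z" .
qed

lemma Dmap_snd_prodist:
  assumes p: "p \<in> Dist A" and fq: "finite (supp q)"
  shows "Dmap snd (prodist p q) = q"
proof
  fix y
  have "Dmap snd (prodist p q) y = (\<Sum>x\<in>supp p. \<Sum>b\<in>supp q. p x * (q b * (if b = y then 1 else 0)))"
    unfolding Dmap_prodist_alt[OF DistD(2)[OF p] fq] by (simp add: mult.assoc)
  also have "\<dots> = (\<Sum>x\<in>supp p. p x) * q y"
    by (simp add: sum_distrib_left[symmetric] sum_distrib_right sum_supp_ind[OF fq])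
  also have "\<dots> = q y" using DistD(4)[OF p] by simp
  finally show "Dmap snd (prodist p q) y = q y" .
qed

lemma Dmap_fst_prodist:
  assumes fp: "finite (supp p)" and q: "q \<in> Dist B"
  shows "Dmap fst (prodist p q) = p"
proof
  fix y
  have "Dmap fst (prodist p q) y = (\<Sum>x\<in>supp p. \<Sum>b\<in>supp q. p x * q b * (if x = y then 1 else 0))"
    unfolding Dmap_prodist_alt[OF fp DistD(2)[OF q]] by simp
  also have "\<dots> = (\<Sum>x\<in>supp p. (p x * (if x = y then 1 else 0)) * (\<Sum>b\<in>supp q. q b))"
    by (intro sum.cong refl) (simp add: sum_distrib_left mult_ac)
  also have "\<dots> = p y"
    using DistD(4)[OF q] by (simp add: sum_supp_ind[OF fp])
  finally show "Dmap fst (prodist p q) y = p y" .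
qed

lemma Dmap_pair_left:
  fixes p :: "'a \<Rightarrow> real" and y :: 'b
  assumes fp: "finite (supp p)"
  shows "Dmap (\<lambda>x. (x, y)) p = prodist p (delta y)"
proof
  fix w :: "'a \<times> 'b"
  obtain u v where w: "w = (u, v)" by (cases w)
  have "Dmap (\<lambda>x. (x, y)) p w = (\<Sum>x\<in>supp p. p x * (if x = u then 1 else 0)) * delta y v"
    unfolding Dmap_alt w by (simp add: sum_distrib_right delta_def)
  also have "\<dots> = prodist p (delta y) w" by (simp add: sum_supp_ind[OF fp] w)
  finally show "Dmap (\<lambda>x. (x, y)) p w = prodist p (delta y) w" .
qed

lemma Dmap_pair_right:
  fixes q :: "'b \<Rightarrow> real" and x :: 'a
  assumes fq: "finite (supp q)"
  shows "Dmap (\<lambda>y. (x, y)) q = prodist (delta x) q"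
proof
  fix w :: "'a \<times> 'b"
  obtain u v where w: "w = (u, v)" by (cases w)
  have "Dmap (\<lambda>y. (x, y)) q w = delta x u * (\<Sum>y\<in>supp q. q y * (if y = v then 1 else 0))"
    unfolding Dmap_alt w by (simp add: sum_distrib_left delta_def)
  also have "\<dots> = prodist (delta x) q w" by (simp add: sum_supp_ind[OF fq] w)
  finally show "Dmap (\<lambda>y. (x, y)) q w = prodist (delta x) q w" .
qed


section \<open>Convex sets, convex and biconvex maps\<close>

lemma cs_bary_in: "convex_set X \<Longrightarrow> p \<in> Dist (carr X) \<Longrightarrow> bary X p \<in> carr X"
  unfolding convex_set_def by blast

lemma cs_bary_delta: "convex_set X \<Longrightarrow> x \<in> carr X \<Longrightarrow> bary X (delta x) = x"
  unfolding convex_set_def by blast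

lemma cs_law: "convex_set X \<Longrightarrow> P \<in> Dist (Dist (carr X)) \<Longrightarrow> bary X (Dmu P) = bary X (Dmap (bary X) P)"
  unfolding convex_set_def by blast

lemma cs_mix:
  assumes X: "convex_set X" and p: "p \<in> Dist A" and Q: "\<And>a. a \<in> A \<Longrightarrow> Q a \<in> Dist (carr X)"
  shows "bary X (Dmap (\<lambda>a. bary X (Q a)) p) = bary X (Dmu (Dmap Q p))"
proof -
  have P: "Dmap Q p \<in> Dist (Dist (carr X))" by (rule Dmap_Dist[OF p Q])
  have "bary X (Dmu (Dmap Q p)) = bary X (Dmap (bary X) (Dmap Q p))" by (rule cs_law[OF X P])
  also have "\<dots> = bary X (Dmap (\<lambda>a. bary X (Q a)) p)" by (simp add: Dmap_comp[OF DistD(2)[OF p]])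
  finally show ?thesis by simp
qed

lemma cs_fubini:
  assumes V: "convex_set V" and r: "r \<in> Dist A" and q: "q \<in> Dist B"
    and g: "\<And>a b. a \<in> A \<Longrightarrow> b \<in> B \<Longrightarrow> g a b \<in> carr V"
  shows "bary V (Dmap (\<lambda>a. bary V (Dmap (g a) q)) r) = bary V (Dmap (\<lambda>(a, b). g a b) (prodist r q))"
proof -
  have "bary V (Dmap (\<lambda>a. bary V (Dmap (g a) q)) r) = bary V (Dmu (Dmap (\<lambda>a. Dmap (g a) q) r))"
    by (rule cs_mix[OF V r]) (rule Dmap_Dist[OF q g])
  also have "\<dots> = bary V (Dmap (\<lambda>(a, b). g a b) (prodist r q))"
    by (simp add: Fubini1[OF DistD(2)[OF r] DistD(2)[OF q]])
  finally show ?thesis .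
qed

lemma cs_fubini2:
  assumes V: "convex_set V" and r: "r \<in> Dist A" and q: "q \<in> Dist B"
    and g: "\<And>a b. a \<in> A \<Longrightarrow> b \<in> B \<Longrightarrow> g a b \<in> carr V"
  shows "bary V (Dmap (\<lambda>b. bary V (Dmap (\<lambda>a. g a b) r)) q) = bary V (Dmap (\<lambda>(a, b). g a b) (prodist r q))"
proof -
  have "bary V (Dmap (\<lambda>b. bary V (Dmap (\<lambda>a. g a b) r)) q) = bary V (Dmu (Dmap (\<lambda>b. Dmap (\<lambda>a. g a b) r) q))"
    by (rule cs_mix[OF V q]) (rule Dmap_Dist[OF r], rule g)
  also have "\<dots> = bary V (Dmap (\<lambda>(a, b). g a b) (prodist r q))"
    by (simp add: Fubini2[OF DistD(2)[OF r] DistD(2)[OF q]])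
  finally show ?thesis .
qed

lemma cm_in: "convex_map X Y f \<Longrightarrow> x \<in> carr X \<Longrightarrow> f x \<in> carr Y"
  unfolding convex_map_def by blast

lemma cm_bary: "convex_map X Y f \<Longrightarrow> p \<in> Dist (carr X) \<Longrightarrow> f (bary X p) = bary Y (Dmap f p)"
  unfolding convex_map_def by blast

lemma cm_I:
  "(\<And>x. x \<in> carr X \<Longrightarrow> f x \<in> carr Y) \<Longrightarrow> (\<And>p. p \<in> Dist (carr X) \<Longrightarrow> f (bary X p) = bary Y (Dmap f p))
   \<Longrightarrow> convex_map X Y f"
  unfolding convex_map_def by blast

lemma cm_comp:
  assumes f: "convex_map X Y f" and g: "convex_map Y Z g"
  shows "convex_map X Z (\<lambda>x. g (f x))"
proof (rule cm_I)
  show "\<And>x. x \<in> carr X \<Longrightarrow> g (f x) \<in> carr Z" using cm_in[OF f] cm_in[OF g] by blast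
  fix p assume p: "p \<in> Dist (carr X)"
  have fp: "Dmap f p \<in> Dist (carr Y)" by (rule Dmap_Dist[OF p cm_in[OF f]])
  have "g (f (bary X p)) = g (bary Y (Dmap f p))" by (simp add: cm_bary[OF f p])
  also have "\<dots> = bary Z (Dmap g (Dmap f p))" by (rule cm_bary[OF g fp])
  also have "\<dots> = bary Z (Dmap (\<lambda>x. g (f x)) p)" by (simp add: Dmap_comp[OF DistD(2)[OF p]])
  finally show "g (f (bary X p)) = bary Z (Dmap (\<lambda>x. g (f x)) p)" .
qed

lemma cm_cong:
  assumes X: "convex_set X" and f: "convex_map X Y f" and eq: "\<And>x. x \<in> carr X \<Longrightarrow> f x = g x"
  shows "convex_map X Y g"
proof (rule cm_I)
  show "\<And>x. x \<in> carr X \<Longrightarrow> g x \<in> carr Y" using cm_in[OF f] eq by metis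
  fix p assume p: "p \<in> Dist (carr X)"
  have "g (bary X p) = f (bary X p)" using eq[OF cs_bary_in[OF X p]] by simp
  also have "\<dots> = bary Y (Dmap f p)" by (rule cm_bary[OF f p])
  also have "Dmap f p = Dmap g p" by (rule Dmap_cong) (use eq Dist_supp_mem[OF p] in blast)
  finally show "g (bary X p) = bary Y (Dmap g p)" .
qed

lemma cm_idm:
  assumes X: "convex_set X"
  shows "convex_map X X (idm X)"
proof (rule cm_I)
  show "\<And>x. x \<in> carr X \<Longrightarrow> idm X x \<in> carr X" by (simp add: idm_def)
  fix p assume p: "p \<in> Dist (carr X)"
  have "Dmap (idm X) p = Dmap (\<lambda>x. x) p"
    by (rule Dmap_cong) (simp add: idm_def Dist_supp_mem[OF p])
  also have "\<dots> = p" by (rule Dmap_id[OF DistD(2)[OF p]])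
  finally show "idm X (bary X p) = bary X (Dmap (idm X) p)"
    by (simp add: idm_def cs_bary_in[OF X p])
qed

lemma cm_const:
  assumes Y: "convex_set Y" and c: "c \<in> carr Y"
  shows "convex_map X Y (\<lambda>_. c)"
proof (rule cm_I)
  show "\<And>x. c \<in> carr Y" by (rule c)
  fix p assume p: "p \<in> Dist (carr X)"
  show "c = bary Y (Dmap (\<lambda>_. c) p)" by (simp add: Dmap_const[OF p] cs_bary_delta[OF Y c])
qed

lemma bc_in: "biconvex X Y Z b \<Longrightarrow> x \<in> carr X \<Longrightarrow> y \<in> carr Y \<Longrightarrow> b x y \<in> carr Z"
  unfolding biconvex_def by blast

lemma bc_bary: "biconvex X Y Z b \<Longrightarrow> p \<in> Dist (carr X) \<Longrightarrow> q \<in> Dist (carr Y) \<Longrightarrow>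
   b (bary X p) (bary Y q) = bary Z (Dmap (\<lambda>(x, y). b x y) (prodist p q))"
  unfolding biconvex_def by blast

lemma bc_I:
  "(\<And>x y. x \<in> carr X \<Longrightarrow> y \<in> carr Y \<Longrightarrow> b x y \<in> carr Z) \<Longrightarrow>
   (\<And>p q. p \<in> Dist (carr X) \<Longrightarrow> q \<in> Dist (carr Y) \<Longrightarrow>
      b (bary X p) (bary Y q) = bary Z (Dmap (\<lambda>(x, y). b x y) (prodist p q))) \<Longrightarrow> biconvex X Y Z b"
  unfolding biconvex_def by blast

lemma prodist_supp_mem:
  assumes "p \<in> Dist A" "q \<in> Dist B" "z \<in> supp (prodist p q)"
  shows "fst z \<in> A" "snd z \<in> B"
  using assms by (auto simp: supp_prodist dest: Dist_supp_mem)

lemma bc_fix1: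
  assumes Y: "convex_set Y" and b: "biconvex X Y Z b" and y: "y \<in> carr Y"
  shows "convex_map X Z (\<lambda>x. b x y)"
proof (rule cm_I)
  show "\<And>x. x \<in> carr X \<Longrightarrow> b x y \<in> carr Z" using bc_in[OF b] y by blast
  fix p assume p: "p \<in> Dist (carr X)"
  have "b (bary X p) y = b (bary X p) (bary Y (delta y))" by (simp add: cs_bary_delta[OF Y y])
  also have "\<dots> = bary Z (Dmap (\<lambda>(x, y). b x y) (prodist p (delta y)))"
    by (rule bc_bary[OF b p delta_Dist[OF y]])
  also have "prodist p (delta y) = Dmap (\<lambda>x. (x, y)) p" by (rule Dmap_pair_left[OF DistD(2)[OF p], symmetric])
  also have "Dmap (\<lambda>(x, y). b x y) (Dmap (\<lambda>x. (x, y)) p) = Dmap (\<lambda>x. b x y) p"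
    by (simp add: Dmap_comp[OF DistD(2)[OF p]])
  finally show "b (bary X p) y = bary Z (Dmap (\<lambda>x. b x y) p)" .
qed

lemma bc_fix2:
  assumes X: "convex_set X" and b: "biconvex X Y Z b" and x: "x \<in> carr X"
  shows "convex_map Y Z (b x)"
proof (rule cm_I)
  show "\<And>y. y \<in> carr Y \<Longrightarrow> b x y \<in> carr Z" using bc_in[OF b] x by blast
  fix q assume q: "q \<in> Dist (carr Y)"
  have "b x (bary Y q) = b (bary X (delta x)) (bary Y q)" by (simp add: cs_bary_delta[OF X x])
  also have "\<dots> = bary Z (Dmap (\<lambda>(x, y). b x y) (prodist (delta x) q))"
    by (rule bc_bary[OF b delta_Dist[OF x] q])
  also have "prodist (delta x) q = Dmap (\<lambda>y. (x, y)) q" by (rule Dmap_pair_right[OF DistD(2)[OF q], symmetric])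
  also have "Dmap (\<lambda>(x, y). b x y) (Dmap (\<lambda>y. (x, y)) q) = Dmap (b x) q"
    by (simp add: Dmap_comp[OF DistD(2)[OF q]])
  finally show "b x (bary Y q) = bary Z (Dmap (b x) q)" .
qed

lemma bc_post:
  assumes b: "biconvex X Y Z b" and h: "convex_map Z W h"
  shows "biconvex X Y W (\<lambda>x y. h (b x y))"
proof (rule bc_I)
  show "\<And>x y. x \<in> carr X \<Longrightarrow> y \<in> carr Y \<Longrightarrow> h (b x y) \<in> carr W"
    using bc_in[OF b] cm_in[OF h] by blast
  fix p q assume p: "p \<in> Dist (carr X)" and q: "q \<in> Dist (carr Y)"
  have pq: "prodist p q \<in> Dist (carr X \<times> carr Y)" by (rule prodist_Dist[OF p q])
  have bpq: "Dmap (\<lambda>(x, y). b x y) (prodist p q) \<in> Dist (carr Z)"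
    by (rule Dmap_Dist[OF pq]) (auto intro: bc_in[OF b])
  have "h (b (bary X p) (bary Y q)) = h (bary Z (Dmap (\<lambda>(x, y). b x y) (prodist p q)))"
    by (simp add: bc_bary[OF b p q])
  also have "\<dots> = bary W (Dmap h (Dmap (\<lambda>(x, y). b x y) (prodist p q)))" by (rule cm_bary[OF h bpq])
  also have "Dmap h (Dmap (\<lambda>(x, y). b x y) (prodist p q)) = Dmap (\<lambda>(x, y). h (b x y)) (prodist p q)"
    by (simp add: Dmap_comp[OF DistD(2)[OF pq]] case_prod_beta')
  finally show "h (b (bary X p) (bary Y q)) = bary W (Dmap (\<lambda>(x, y). h (b x y)) (prodist p q))" .
qed

lemma bc_pre:
  assumes b: "biconvex X' Y' Z b" and f: "convex_map X X' f" and g: "convex_map Y Y' g"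
  shows "biconvex X Y Z (\<lambda>x y. b (f x) (g y))"
proof (rule bc_I)
  show "\<And>x y. x \<in> carr X \<Longrightarrow> y \<in> carr Y \<Longrightarrow> b (f x) (g y) \<in> carr Z"
    using bc_in[OF b] cm_in[OF f] cm_in[OF g] by blast
  fix p q assume p: "p \<in> Dist (carr X)" and q: "q \<in> Dist (carr Y)"
  have fp: "Dmap f p \<in> Dist (carr X')" by (rule Dmap_Dist[OF p cm_in[OF f]])
  have gq: "Dmap g q \<in> Dist (carr Y')" by (rule Dmap_Dist[OF q cm_in[OF g]])
  have "b (f (bary X p)) (g (bary Y q)) = b (bary X' (Dmap f p)) (bary Y' (Dmap g q))"
    by (simp add: cm_bary[OF f p] cm_bary[OF g q])
  also have "\<dots> = bary Z (Dmap (\<lambda>(x, y). b x y) (prodist (Dmap f p) (Dmap g q)))"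
    by (rule bc_bary[OF b fp gq])
  also have "prodist (Dmap f p) (Dmap g q) = Dmap (\<lambda>(x, y). (f x, g y)) (prodist p q)"
    by (rule Dmap_prodist[OF DistD(2)[OF p] DistD(2)[OF q], symmetric])
  also have "Dmap (\<lambda>(x, y). b x y) (Dmap (\<lambda>(x, y). (f x, g y)) (prodist p q))
      = Dmap (\<lambda>(x, y). b (f x) (g y)) (prodist p q)"
    using DistD(2)[OF p] DistD(2)[OF q]
    by (simp add: Dmap_comp supp_prodist case_prod_beta')
  finally show "b (f (bary X p)) (g (bary Y q)) = bary Z (Dmap (\<lambda>(x, y). b (f x) (g y)) (prodist p q))" .
qed

lemma bc_cong:
  assumes X: "convex_set X" and Y: "convex_set Y" and b: "biconvex X Y Z b"
    and eq: "\<And>x y. x \<in> carr X \<Longrightarrow> y \<in> carr Y \<Longrightarrow> b x y = b2 x y"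
  shows "biconvex X Y Z b2"
proof (rule bc_I)
  show "\<And>x y. x \<in> carr X \<Longrightarrow> y \<in> carr Y \<Longrightarrow> b2 x y \<in> carr Z"
    using bc_in[OF b] eq by metis
  fix p q assume p: "p \<in> Dist (carr X)" and q: "q \<in> Dist (carr Y)"
  have "b2 (bary X p) (bary Y q) = b (bary X p) (bary Y q)"
    using eq[OF cs_bary_in[OF X p] cs_bary_in[OF Y q]] by simp
  also have "\<dots> = bary Z (Dmap (\<lambda>(x, y). b x y) (prodist p q))" by (rule bc_bary[OF b p q])
  also have "Dmap (\<lambda>(x, y). b x y) (prodist p q) = Dmap (\<lambda>(x, y). b2 x y) (prodist p q)"
  proof (rule Dmap_cong)
    fix z assume z: "z \<in> supp (prodist p q)"
    then have "fst z \<in> carr X" "snd z \<in> carr Y" using prodist_supp_mem[OF p q] by auto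
    then show "(case z of (x, y) \<Rightarrow> b x y) = (case z of (x, y) \<Rightarrow> b2 x y)"
      using eq by (auto split: prod.splits)
  qed
  finally show "b2 (bary X p) (bary Y q) = bary Z (Dmap (\<lambda>(x, y). b2 x y) (prodist p q))" .
qed

lemma bc_sep:
  assumes Y: "convex_set Y" and V: "convex_set V"
    and inV: "\<And>x y. x \<in> carr X \<Longrightarrow> y \<in> carr Y \<Longrightarrow> b x y \<in> carr V"
    and c1: "\<And>y. y \<in> carr Y \<Longrightarrow> convex_map X V (\<lambda>x. b x y)"
    and c2: "\<And>x. x \<in> carr X \<Longrightarrow> convex_map Y V (b x)"
  shows "biconvex X Y V b"
proof (rule bc_I)
  show "\<And>x y. x \<in> carr X \<Longrightarrow> y \<in> carr Y \<Longrightarrow> b x y \<in> carr V" by (rule inV)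
  fix p q assume p: "p \<in> Dist (carr X)" and q: "q \<in> Dist (carr Y)"
  have "b (bary X p) (bary Y q) = bary V (Dmap (\<lambda>x. b x (bary Y q)) p)"
    by (rule cm_bary[OF c1[OF cs_bary_in[OF Y q]] p])
  also have "Dmap (\<lambda>x. b x (bary Y q)) p = Dmap (\<lambda>x. bary V (Dmap (b x) q)) p"
    by (rule Dmap_cong) (rule cm_bary[OF c2 q], rule Dist_supp_mem[OF p])
  also have "bary V \<dots> = bary V (Dmap (\<lambda>(x, y). b x y) (prodist p q))"
    by (rule cs_fubini[OF V p q inV])
  finally show "b (bary X p) (bary Y q) = bary V (Dmap (\<lambda>(x, y). b x y) (prodist p q))" .
qed

lemma cm_mixfam:
  assumes Z: "convex_set Z" and V: "convex_set V" and r: "r \<in> Dist A"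
    and k: "\<And>a. a \<in> A \<Longrightarrow> convex_map Z V (k a)"
  shows "convex_map Z V (\<lambda>z. bary V (Dmap (\<lambda>a. k a z) r))"
proof (rule cm_I)
  have kin: "\<And>a z. a \<in> A \<Longrightarrow> z \<in> carr Z \<Longrightarrow> k a z \<in> carr V" by (rule cm_in[OF k])
  show "\<And>z. z \<in> carr Z \<Longrightarrow> bary V (Dmap (\<lambda>a. k a z) r) \<in> carr V"
    by (rule cs_bary_in[OF V], rule Dmap_Dist[OF r], rule kin)
  fix q assume q: "q \<in> Dist (carr Z)"
  have "Dmap (\<lambda>a. k a (bary Z q)) r = Dmap (\<lambda>a. bary V (Dmap (k a) q)) r"
    by (rule Dmap_cong) (rule cm_bary[OF k q], rule Dist_supp_mem[OF r])
  then have "bary V (Dmap (\<lambda>a. k a (bary Z q)) r) = bary V (Dmap (\<lambda>a. bary V (Dmap (k a) q)) r)" by simp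
  also have "\<dots> = bary V (Dmap (\<lambda>(a, z). k a z) (prodist r q))"
    by (rule cs_fubini[OF V r q kin])
  also have "\<dots> = bary V (Dmap (\<lambda>z. bary V (Dmap (\<lambda>a. k a z) r)) q)"
    by (rule cs_fubini2[OF V r q kin, symmetric])
  finally show "bary V (Dmap (\<lambda>a. k a (bary Z q)) r) = bary V (Dmap (\<lambda>z. bary V (Dmap (\<lambda>a. k a z) r)) q)" .
qed


section \<open>The tensor product\<close>

lemma carr_free[simp]: "carr (free_cset A) = Dist A" by (simp add: free_cset_def)
lemma bary_free[simp]: "bary (free_cset A) = Dmu" by (simp add: free_cset_def)

definition tcls :: "'x cset \<Rightarrow> 'y cset \<Rightarrow> ('x \<times> 'y \<Rightarrow> real) \<Rightarrow> ('x \<times> 'y \<Rightarrow> real) set" where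
  "tcls X Y r = tensor_rel X Y `` {r}"

definition trep :: "'a set \<Rightarrow> 'a" where
  "trep = (\<lambda>c. SOME q. q \<in> c)"

lemma carr_tensor: "carr (tensor X Y) = Dist (carr X \<times> carr Y) // tensor_rel X Y"
  by (simp add: tensor_def)

lemma bary_tensor: "bary (tensor X Y) P = tcls X Y (Dmu (Dmap trep P))"
  by (simp add: tensor_def tcls_def trep_def)

lemma tens_tcls: "tens X Y x y = tcls X Y (delta (x, y))"
  by (simp add: tens_def tcls_def)

lemma tens_case: "(\<lambda>(x, y). tens X Y x y) = (\<lambda>z. tcls X Y (delta z))"
  by (rule ext) (simp add: tens_tcls split: prod.splits)

lemma cong_univ: "cset_congruence (free_cset A) (Dist A \<times> Dist A)"
  unfolding cset_congruence_def
  by (auto simp: equiv_def refl_on_def sym_def trans_def intro: Dmu_Dist)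

lemma image_class_absorb:
  assumes "equiv A R" "S \<subseteq> R" "x \<in> A" "(x, x) \<in> S"
  shows "R `` (S `` {x}) = R `` {x}"
proof
  show "R `` {x} \<subseteq> R `` (S `` {x})" using assms(4) by auto
  show "R `` (S `` {x}) \<subseteq> R `` {x}"
  proof
    fix z assume "z \<in> R `` (S `` {x})"
    then obtain y where "(x, y) \<in> S" "(y, z) \<in> R" by auto
    then have "(x, y) \<in> R" "(y, z) \<in> R" using assms(2) by auto
    then have "(x, z) \<in> R" using assms(1) unfolding equiv_def trans_def by blast
    then show "z \<in> R `` {x}" by simp
  qed
qed

lemma cong_Inter:
  assumes ne: "F \<noteq> {}" and cF: "\<And>R. R \<in> F \<Longrightarrow> cset_congruence (free_cset A) R"
  shows "cset_congruence (free_cset A) (\<Inter>F)"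
proof -
  have eqF: "\<And>R. R \<in> F \<Longrightarrow> equiv (Dist A) R" using cF by (simp add: cset_congruence_def)
  have eq: "equiv (Dist A) (\<Inter>F)"
  proof (rule equivI)
    obtain R0 where R0: "R0 \<in> F" using ne by blast
    show "\<Inter>F \<subseteq> Dist A \<times> Dist A" using eqF[OF R0] R0 unfolding equiv_def by blast
    show "refl_on (Dist A) (\<Inter>F)" using eqF unfolding equiv_def refl_on_def by blast
    show "sym (\<Inter>F)" using eqF unfolding equiv_def sym_def by blast
    show "trans (\<Inter>F)" using eqF unfolding equiv_def trans_def by blast
  qed
  show ?thesis unfolding cset_congruence_def
  proof (intro conjI ballI impI)
    show "equiv (carr (free_cset A)) (\<Inter>F)" using eq by simp
    fix P Q assume P: "P \<in> Dist (carr (free_cset A))" and Q: "Q \<in> Dist (carr (free_cset A))"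
      and PQ: "Dmap (\<lambda>x. \<Inter>F `` {x}) P = Dmap (\<lambda>x. \<Inter>F `` {x}) Q"
    have P': "P \<in> Dist (Dist A)" and Q': "Q \<in> Dist (Dist A)" using P Q by simp_all
    show "(bary (free_cset A) P, bary (free_cset A) Q) \<in> \<Inter>F"
    proof
      fix R assume R: "R \<in> F"
      have sub: "\<Inter>F \<subseteq> R" using R by blast
      have key: "\<And>M. M \<in> Dist (Dist A) \<Longrightarrow>
          Dmap (\<lambda>x. R `` {x}) M = Dmap (\<lambda>c. R `` c) (Dmap (\<lambda>x. \<Inter>F `` {x}) M)"
      proof -
        fix M assume M: "M \<in> Dist (Dist A)"
        have "Dmap (\<lambda>c. R `` c) (Dmap (\<lambda>x. \<Inter>F `` {x}) M) = Dmap (\<lambda>x. R `` (\<Inter>F `` {x})) M"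
          by (rule Dmap_comp[OF DistD(2)[OF M]])
        also have "\<dots> = Dmap (\<lambda>x. R `` {x}) M"
        proof (rule Dmap_cong)
          fix x assume "x \<in> supp M"
          then have x: "x \<in> Dist A" using Dist_supp_mem[OF M] by blast
          have "(x, x) \<in> \<Inter>F" using eq x unfolding equiv_def refl_on_def by blast
          then show "R `` (\<Inter>F `` {x}) = R `` {x}"
            by (rule image_class_absorb[OF eqF[OF R] sub x])
        qed
        finally show "Dmap (\<lambda>x. R `` {x}) M = Dmap (\<lambda>c. R `` c) (Dmap (\<lambda>x. \<Inter>F `` {x}) M)" ..
      qed
      have "Dmap (\<lambda>x. R `` {x}) P = Dmap (\<lambda>x. R `` {x}) Q"
        using key[OF P'] key[OF Q'] PQ by simp
      then show "(bary (free_cset A) P, bary (free_cset A) Q) \<in> R"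
        using cF[OF R] P Q unfolding cset_congruence_def by blast
    qed
  qed
qed

lemma gens_sub:
  assumes X: "convex_set X" and Y: "convex_set Y"
  shows "tensor_gens X Y \<subseteq> Dist (carr X \<times> carr Y) \<times> Dist (carr X \<times> carr Y)"
proof
  fix g assume "g \<in> tensor_gens X Y"
  then consider (l) p y where "g = (delta (bary X p, y), Dmap (\<lambda>x. (x, y)) p)" "p \<in> Dist (carr X)" "y \<in> carr Y"
    | (r) x q where "g = (delta (x, bary Y q), Dmap (\<lambda>y. (x, y)) q)" "x \<in> carr X" "q \<in> Dist (carr Y)"
    unfolding tensor_gens_def by blast
  then show "g \<in> Dist (carr X \<times> carr Y) \<times> Dist (carr X \<times> carr Y)"
  proof cases
    case l then show ?thesis
      by (auto intro!: delta_Dist Dmap_Dist cs_bary_in[OF X])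
  next
    case r then show ?thesis
      by (auto intro!: delta_Dist Dmap_Dist cs_bary_in[OF Y])
  qed
qed

lemma trel_props:
  assumes X: "convex_set X" and Y: "convex_set Y"
  shows "cset_congruence (free_cset (carr X \<times> carr Y)) (tensor_rel X Y)"
    and "tensor_gens X Y \<subseteq> tensor_rel X Y"
proof -
  let ?F = "{R. cset_congruence (free_cset (carr X \<times> carr Y)) R \<and> tensor_gens X Y \<subseteq> R}"
  have "Dist (carr X \<times> carr Y) \<times> Dist (carr X \<times> carr Y) \<in> ?F"
    using cong_univ gens_sub[OF X Y] by blast
  then have ne: "?F \<noteq> {}" by blast
  show "cset_congruence (free_cset (carr X \<times> carr Y)) (tensor_rel X Y)"
    unfolding tensor_rel_def by (rule cong_Inter[OF ne]) blast
  show "tensor_gens X Y \<subseteq> tensor_rel X Y"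
    unfolding tensor_rel_def by blast
qed

lemma trel_lower:
  "cset_congruence (free_cset (carr X \<times> carr Y)) K \<Longrightarrow> tensor_gens X Y \<subseteq> K \<Longrightarrow> tensor_rel X Y \<subseteq> K"
  unfolding tensor_rel_def by blast

lemma trel_equiv:
  assumes X: "convex_set X" and Y: "convex_set Y"
  shows "equiv (Dist (carr X \<times> carr Y)) (tensor_rel X Y)"
  using trel_props(1)[OF X Y] by (simp add: cset_congruence_def)

lemma trel_cond:
  assumes X: "convex_set X" and Y: "convex_set Y"
    and P: "P \<in> Dist (Dist (carr X \<times> carr Y))" and Q: "Q \<in> Dist (Dist (carr X \<times> carr Y))"
    and PQ: "Dmap (tcls X Y) P = Dmap (tcls X Y) Q"
  shows "(Dmu P, Dmu Q) \<in> tensor_rel X Y"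
proof -
  have "Dmap (\<lambda>x. tensor_rel X Y `` {x}) P = Dmap (\<lambda>x. tensor_rel X Y `` {x}) Q"
    using PQ by (simp add: tcls_def[abs_def])
  then show ?thesis using trel_props(1)[OF X Y] P Q unfolding cset_congruence_def by simp
qed

lemma tcls_in:
  assumes X: "convex_set X" and Y: "convex_set Y" and r: "r \<in> Dist (carr X \<times> carr Y)"
  shows "tcls X Y r \<in> carr (tensor X Y)"
  unfolding carr_tensor tcls_def using r by (rule quotientI)

lemma tcls_eq_iff:
  assumes X: "convex_set X" and Y: "convex_set Y"
    and r: "r \<in> Dist (carr X \<times> carr Y)" and r': "r' \<in> Dist (carr X \<times> carr Y)"
  shows "tcls X Y r = tcls X Y r' \<longleftrightarrow> (r, r') \<in> tensor_rel X Y"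
  unfolding tcls_def by (rule eq_equiv_class_iff[OF trel_equiv[OF X Y] r r'])

lemma trep_props:
  assumes X: "convex_set X" and Y: "convex_set Y" and c: "c \<in> carr (tensor X Y)"
  shows "trep c \<in> Dist (carr X \<times> carr Y)" "tcls X Y (trep c) = c"
proof -
  from c obtain r where r: "r \<in> Dist (carr X \<times> carr Y)" and cr: "c = tensor_rel X Y `` {r}"
    unfolding carr_tensor by (rule quotientE)
  have "r \<in> c" using cr equiv_class_self[OF trel_equiv[OF X Y] r] by simp
  then have tc: "trep c \<in> c" unfolding trep_def by (rule someI[where P="\<lambda>q. q \<in> c"])
  then have rt: "(r, trep c) \<in> tensor_rel X Y" using cr by simp
  then show "trep c \<in> Dist (carr X \<times> carr Y)" using trel_equiv[OF X Y] unfolding equiv_def by blast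
  show "tcls X Y (trep c) = c"
    unfolding tcls_def by (subst (2) cr) (rule equiv_class_eq[OF trel_equiv[OF X Y] rt, symmetric])
qed

lemma tcls_trep:
  assumes X: "convex_set X" and Y: "convex_set Y" and r: "r \<in> Dist (carr X \<times> carr Y)"
  shows "tcls X Y (trep (tcls X Y r)) = tcls X Y r"
  using trep_props(2)[OF X Y tcls_in[OF X Y r]] .

lemma tensor_cases:
  assumes X: "convex_set X" and Y: "convex_set Y" and c: "c \<in> carr (tensor X Y)"
  obtains r where "r \<in> Dist (carr X \<times> carr Y)" "c = tcls X Y r"
  using trep_props[OF X Y c] by metis

lemma bary_tcls:
  assumes X: "convex_set X" and Y: "convex_set Y" and P: "P \<in> Dist (Dist (carr X \<times> carr Y))"
  shows "bary (tensor X Y) (Dmap (tcls X Y) P) = tcls X Y (Dmu P)"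
proof -
  let ?A = "carr X \<times> carr Y"
  have finP: "finite (supp P)" by (rule DistD(2)[OF P])
  have sP: "\<And>r. r \<in> supp P \<Longrightarrow> r \<in> Dist ?A" using Dist_supp_mem[OF P] by blast
  have "Dmap trep (Dmap (tcls X Y) P) = Dmap (\<lambda>r. trep (tcls X Y r)) P"
    by (rule Dmap_comp[OF finP])
  moreover have P2: "Dmap (\<lambda>r. trep (tcls X Y r)) P \<in> Dist (Dist ?A)"
    by (rule Dmap_Dist[OF P]) (rule trep_props(1)[OF X Y tcls_in[OF X Y]])
  moreover have "Dmap (tcls X Y) (Dmap (\<lambda>r. trep (tcls X Y r)) P) = Dmap (tcls X Y) P"
  proof -
    have "Dmap (tcls X Y) (Dmap (\<lambda>r. trep (tcls X Y r)) P) = Dmap (\<lambda>r. tcls X Y (trep (tcls X Y r))) P"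
      by (rule Dmap_comp[OF finP])
    also have "\<dots> = Dmap (tcls X Y) P"
      by (rule Dmap_cong) (rule tcls_trep[OF X Y sP])
    finally show ?thesis .
  qed
  ultimately have "(Dmu (Dmap trep (Dmap (tcls X Y) P)), Dmu P) \<in> tensor_rel X Y"
    using trel_cond[OF X Y _ P] by simp
  moreover have "Dmu (Dmap trep (Dmap (tcls X Y) P)) \<in> Dist ?A"
    using P2 \<open>Dmap trep (Dmap (tcls X Y) P) = _\<close> by (simp add: Dmu_Dist)
  ultimately show ?thesis
    unfolding bary_tensor using tcls_eq_iff[OF X Y _ Dmu_Dist[OF P]] by blast
qed

lemma tcls_as_bary:
  assumes X: "convex_set X" and Y: "convex_set Y" and r: "r \<in> Dist (carr X \<times> carr Y)"
  shows "tcls X Y r = bary (tensor X Y) (Dmap (\<lambda>(x, y). tens X Y x y) r)"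
proof -
  have fin: "finite (supp r)" by (rule DistD(2)[OF r])
  have "Dmap (\<lambda>(x, y). tens X Y x y) r = Dmap (tcls X Y) (Dmap delta r)"
    unfolding tens_case by (simp add: Dmap_comp[OF fin])
  moreover have "Dmap delta r \<in> Dist (Dist (carr X \<times> carr Y))"
    by (rule Dmap_Dist[OF r]) (rule delta_Dist)
  ultimately show ?thesis
    using bary_tcls[OF X Y] Dmu_Dmap_delta0[OF fin] by simp
qed

lemma tens_in:
  assumes X: "convex_set X" and Y: "convex_set Y" and x: "x \<in> carr X" and y: "y \<in> carr Y"
  shows "tens X Y x y \<in> carr (tensor X Y)"
  unfolding tens_tcls by (rule tcls_in[OF X Y delta_Dist]) (simp add: x y)


lemma trep_Dist:
  assumes X: "convex_set X" and Y: "convex_set Y" and p: "p \<in> Dist (carr (tensor X Y))"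
  shows "Dmap trep p \<in> Dist (Dist (carr X \<times> carr Y))"
  by (rule Dmap_Dist[OF p]) (rule trep_props(1)[OF X Y])

lemma tensor_convex:
  assumes X: "convex_set X" and Y: "convex_set Y"
  shows "convex_set (tensor X Y)"
  unfolding convex_set_def
proof (intro conjI ballI)
  let ?A = "carr X \<times> carr Y" and ?T = "tensor X Y"
  fix p assume p: "p \<in> Dist (carr ?T)"
  show "bary ?T p \<in> carr ?T"
    unfolding bary_tensor by (rule tcls_in[OF X Y Dmu_Dist[OF trep_Dist[OF X Y p]]])
next
  let ?A = "carr X \<times> carr Y" and ?T = "tensor X Y"
  fix c assume c: "c \<in> carr ?T"
  show "bary ?T (delta c) = c"
    unfolding bary_tensor Dmap_delta Dmu_delta by (rule trep_props(2)[OF X Y c])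
next
  let ?A = "carr X \<times> carr Y" and ?T = "tensor X Y"
  fix PP assume PP: "PP \<in> Dist (Dist (carr ?T))"
  define P' where "P' = Dmap (Dmap trep) PP"
  have finPP: "finite (supp PP)" by (rule DistD(2)[OF PP])
  have P': "P' \<in> Dist (Dist (Dist ?A))"
    unfolding P'_def by (rule Dmap_Dist[OF PP]) (rule trep_Dist[OF X Y])
  have finP': "finite (supp P')" by (rule DistD(2)[OF P'])
  have sP': "\<And>M. M \<in> supp P' \<Longrightarrow> M \<in> Dist (Dist ?A)" using Dist_supp_mem[OF P'] by blast
  have h1: "Dmap (Dmap (tcls X Y)) P' = PP"
  proof -
    have "Dmap (Dmap (tcls X Y)) P' = Dmap (\<lambda>P. Dmap (tcls X Y) (Dmap trep P)) PP"
      unfolding P'_def by (rule Dmap_comp[OF finPP])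
    also have "\<dots> = Dmap (\<lambda>P. P) PP"
    proof (rule Dmap_cong)
      fix P assume "P \<in> supp PP"
      then have P: "P \<in> Dist (carr ?T)" using Dist_supp_mem[OF PP] by blast
      have "Dmap (tcls X Y) (Dmap trep P) = Dmap (\<lambda>c. tcls X Y (trep c)) P"
        by (rule Dmap_comp[OF DistD(2)[OF P]])
      also have "\<dots> = Dmap (\<lambda>c. c) P"
        by (rule Dmap_cong) (rule trep_props(2)[OF X Y Dist_supp_mem[OF P]])
      also have "\<dots> = P" by (rule Dmap_id[OF DistD(2)[OF P]])
      finally show "Dmap (tcls X Y) (Dmap trep P) = P" .
    qed
    also have "\<dots> = PP" by (rule Dmap_id[OF finPP])
    finally show ?thesis .
  qed
  have "bary ?T (Dmu PP) = bary ?T (Dmu (Dmap (Dmap (tcls X Y)) P'))" by (simp add: h1)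
  also have "\<dots> = bary ?T (Dmap (tcls X Y) (Dmu P'))" by (simp add: Dmap_Dmu[OF P'])
  also have "\<dots> = tcls X Y (Dmu (Dmu P'))" by (rule bary_tcls[OF X Y Dmu_Dist[OF P']])
  also have "\<dots> = tcls X Y (Dmu (Dmap Dmu P'))" by (simp add: Dmu_Dmu[OF P'])
  also have "\<dots> = bary ?T (Dmap (tcls X Y) (Dmap Dmu P'))"
    by (rule bary_tcls[OF X Y, symmetric]) (rule Dmap_Dist[OF P' Dmu_Dist])
  also have "Dmap (tcls X Y) (Dmap Dmu P') = Dmap (\<lambda>M. tcls X Y (Dmu M)) P'"
    by (rule Dmap_comp[OF finP'])
  also have "\<dots> = Dmap (\<lambda>M. bary ?T (Dmap (tcls X Y) M)) P'"
    by (rule Dmap_cong) (rule bary_tcls[OF X Y sP', symmetric])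
  also have "\<dots> = Dmap (bary ?T) (Dmap (Dmap (tcls X Y)) P')"
    by (rule Dmap_comp[OF finP', symmetric])
  also have "\<dots> = Dmap (bary ?T) PP" by (simp add: h1)
  finally show "bary ?T (Dmu PP) = bary ?T (Dmap (bary ?T) PP)" .
qed

lemma Dmap_pairid: "finite (supp r) \<Longrightarrow> Dmap (\<lambda>(a, b). (a, b)) r = r"
  using Dmap_id[of r] by (simp add: id_def)

lemma tens_biconvex:
  assumes X: "convex_set X" and Y: "convex_set Y"
  shows "biconvex X Y (tensor X Y) (tens X Y)"
proof (rule bc_I)
  let ?A = "carr X \<times> carr Y" and ?T = "tensor X Y"
  show "\<And>x y. x \<in> carr X \<Longrightarrow> y \<in> carr Y \<Longrightarrow> tens X Y x y \<in> carr ?T"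
    by (rule tens_in[OF X Y])
  fix p q assume p: "p \<in> Dist (carr X)" and q: "q \<in> Dist (carr Y)"
  have finp: "finite (supp p)" by (rule DistD(2)[OF p])
  have finq: "finite (supp q)" by (rule DistD(2)[OF q])
  define bx where "bx = bary X p"
  define by' where "by' = bary Y q"
  have bx: "bx \<in> carr X" unfolding bx_def by (rule cs_bary_in[OF X p])
  have by': "by' \<in> carr Y" unfolding by'_def by (rule cs_bary_in[OF Y q])
  have pq: "prodist p q \<in> Dist ?A" by (rule prodist_Dist[OF p q])
  have gens: "tensor_gens X Y \<subseteq> tensor_rel X Y" by (rule trel_props(2)[OF X Y])
  have d1: "delta (bx, by') \<in> Dist ?A" by (rule delta_Dist) (simp add: bx by')
  have d2: "Dmap (\<lambda>x. (x, by')) p \<in> Dist ?A" by (rule Dmap_Dist[OF p]) (simp add: by')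
  have s1: "tcls X Y (delta (bx, by')) = tcls X Y (Dmap (\<lambda>x. (x, by')) p)"
  proof -
    have "(delta (bx, by'), Dmap (\<lambda>x. (x, by')) p) \<in> tensor_gens X Y"
      unfolding tensor_gens_def bx_def using p by' by blast
    then show ?thesis using gens tcls_eq_iff[OF X Y d1 d2] by blast
  qed
  define P1 where "P1 = Dmap (\<lambda>x. delta (x, by')) p"
  define P2 where "P2 = Dmap (\<lambda>x. Dmap (\<lambda>y. (x, y)) q) p"
  have P1: "P1 \<in> Dist (Dist ?A)" unfolding P1_def
    by (rule Dmap_Dist[OF p]) (rule delta_Dist, simp add: by')
  have P2: "P2 \<in> Dist (Dist ?A)" unfolding P2_def
    by (rule Dmap_Dist[OF p]) (rule Dmap_Dist[OF q], simp)
  have "Dmap (tcls X Y) P1 = Dmap (\<lambda>x. tcls X Y (delta (x, by'))) p"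
    unfolding P1_def by (rule Dmap_comp[OF finp])
  also have "\<dots> = Dmap (\<lambda>x. tcls X Y (Dmap (\<lambda>y. (x, y)) q)) p"
  proof (rule Dmap_cong)
    fix x assume "x \<in> supp p"
    then have x: "x \<in> carr X" by (rule Dist_supp_mem[OF p])
    have "(delta (x, by'), Dmap (\<lambda>y. (x, y)) q) \<in> tensor_gens X Y"
      unfolding tensor_gens_def by'_def using x q by blast
    moreover have "delta (x, by') \<in> Dist ?A" by (rule delta_Dist) (simp add: x by')
    moreover have "Dmap (\<lambda>y. (x, y)) q \<in> Dist ?A" by (rule Dmap_Dist[OF q]) (simp add: x)
    ultimately show "tcls X Y (delta (x, by')) = tcls X Y (Dmap (\<lambda>y. (x, y)) q)"
      using gens tcls_eq_iff[OF X Y] by blast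
  qed
  also have "\<dots> = Dmap (tcls X Y) P2"
    unfolding P2_def by (rule Dmap_comp[OF finp, symmetric])
  finally have "(Dmu P1, Dmu P2) \<in> tensor_rel X Y" by (rule trel_cond[OF X Y P1 P2])
  moreover have "Dmu P1 = Dmap (\<lambda>x. (x, by')) p"
    unfolding P1_def by (rule Dmu_Dmap_delta[OF finp])
  moreover have "Dmu P2 = prodist p q"
    unfolding P2_def using Fubini1[OF finp finq, of Pair] Dmap_pairid[of "prodist p q"] pq
    by (simp add: DistD(2))
  ultimately have s2: "tcls X Y (Dmap (\<lambda>x. (x, by')) p) = tcls X Y (prodist p q)"
    using tcls_eq_iff[OF X Y d2 pq] by simp
  have "tens X Y (bary X p) (bary Y q) = tcls X Y (prodist p q)"
    unfolding tens_tcls bx_def[symmetric] by'_def[symmetric] using s1 s2 by simp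
  also have "\<dots> = bary ?T (Dmap (\<lambda>(x, y). tens X Y x y) (prodist p q))"
    by (rule tcls_as_bary[OF X Y pq])
  finally show "tens X Y (bary X p) (bary Y q) = bary ?T (Dmap (\<lambda>(x, y). tens X Y x y) (prodist p q))" .
qed

lemma tensor_unique:
  assumes X: "convex_set X" and Y: "convex_set Y"
    and h1: "convex_map (tensor X Y) Z h1" and h2: "convex_map (tensor X Y) Z h2"
    and eq: "\<And>x y. x \<in> carr X \<Longrightarrow> y \<in> carr Y \<Longrightarrow> h1 (tens X Y x y) = h2 (tens X Y x y)"
    and t: "t \<in> carr (tensor X Y)"
  shows "h1 t = h2 t"
proof -
  obtain r where r: "r \<in> Dist (carr X \<times> carr Y)" and tr: "t = tcls X Y r"
    by (rule tensor_cases[OF X Y t])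
  have fin: "finite (supp r)" by (rule DistD(2)[OF r])
  have D: "Dmap (\<lambda>(x, y). tens X Y x y) r \<in> Dist (carr (tensor X Y))"
    by (rule Dmap_Dist[OF r]) (auto intro: tens_in[OF X Y])
  have "h1 t = bary Z (Dmap h1 (Dmap (\<lambda>(x, y). tens X Y x y) r))"
    unfolding tr tcls_as_bary[OF X Y r] by (rule cm_bary[OF h1 D])
  also have "\<dots> = bary Z (Dmap (\<lambda>z. h1 (case z of (x, y) \<Rightarrow> tens X Y x y)) r)"
    by (simp add: Dmap_comp[OF fin])
  also have "\<dots> = bary Z (Dmap (\<lambda>z. h2 (case z of (x, y) \<Rightarrow> tens X Y x y)) r)"
  proof -
    have "Dmap (\<lambda>z. h1 (case z of (x, y) \<Rightarrow> tens X Y x y)) r = Dmap (\<lambda>z. h2 (case z of (x, y) \<Rightarrow> tens X Y x y)) r"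
    proof (rule Dmap_cong)
      fix z assume "z \<in> supp r"
      then have "z \<in> carr X \<times> carr Y" by (rule Dist_supp_mem[OF r])
      then show "h1 (case z of (x, y) \<Rightarrow> tens X Y x y) = h2 (case z of (x, y) \<Rightarrow> tens X Y x y)"
        using eq by (auto split: prod.splits)
    qed
    then show ?thesis by simp
  qed
  also have "\<dots> = bary Z (Dmap h2 (Dmap (\<lambda>(x, y). tens X Y x y) r))"
    by (simp add: Dmap_comp[OF fin])
  also have "\<dots> = h2 t"
    unfolding tr tcls_as_bary[OF X Y r] by (rule cm_bary[OF h2 D, symmetric])
  finally show ?thesis .
qed


lemma lift_exists:
  assumes X: "convex_set X" and Y: "convex_set Y" and Z: "convex_set Z" and b: "biconvex X Y Z f"
  shows "\<exists>h. h \<in> extensional (carr (tensor X Y)) \<and> convex_map (tensor X Y) Z h \<and>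
              (\<forall>x\<in>carr X. \<forall>y\<in>carr Y. h (tens X Y x y) = f x y)"
proof -
  let ?A = "carr X \<times> carr Y" and ?T = "tensor X Y"
  define Fr where "Fr r = bary Z (Dmap (\<lambda>(x, y). f x y) r)" for r
  define K where "K = {(r, r'). r \<in> Dist ?A \<and> r' \<in> Dist ?A \<and> Fr r = Fr r'}"
  have fD: "\<And>r. r \<in> Dist ?A \<Longrightarrow> Dmap (\<lambda>(x, y). f x y) r \<in> Dist (carr Z)"
    by (rule Dmap_Dist) (auto intro: bc_in[OF b])
  have Fr_in: "\<And>r. r \<in> Dist ?A \<Longrightarrow> Fr r \<in> carr Z"
    unfolding Fr_def by (rule cs_bary_in[OF Z fD])
  have Fr_Dmu: "Fr (Dmu P) = bary Z (Dmap Fr P)" if P: "P \<in> Dist (Dist ?A)" for P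
  proof -
    have PP: "Dmap (Dmap (\<lambda>(x, y). f x y)) P \<in> Dist (Dist (carr Z))"
      by (rule Dmap_Dist[OF P fD])
    have "Fr (Dmu P) = bary Z (Dmu (Dmap (Dmap (\<lambda>(x, y). f x y)) P))"
      unfolding Fr_def by (simp add: Dmap_Dmu[OF P])
    also have "\<dots> = bary Z (Dmap (bary Z) (Dmap (Dmap (\<lambda>(x, y). f x y)) P))"
      by (rule cs_law[OF Z PP])
    also have "\<dots> = bary Z (Dmap Fr P)"
      unfolding Fr_def by (simp add: Dmap_comp[OF DistD(2)[OF P]])
    finally show ?thesis .
  qed
  have Kcong: "cset_congruence (free_cset ?A) K"
    unfolding cset_congruence_def
  proof (intro conjI ballI impI)
    show "equiv (carr (free_cset ?A)) K"
      by (auto simp: K_def equiv_def refl_on_def sym_def trans_def)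
    fix P Q assume P: "P \<in> Dist (carr (free_cset ?A))" and Q: "Q \<in> Dist (carr (free_cset ?A))"
      and PQ: "Dmap (\<lambda>x. K `` {x}) P = Dmap (\<lambda>x. K `` {x}) Q"
    have P': "P \<in> Dist (Dist ?A)" and Q': "Q \<in> Dist (Dist ?A)" using P Q by simp_all
    define G where "G c = Fr (SOME r. r \<in> c)" for c
    have G: "G (K `` {r}) = Fr r" if r: "r \<in> Dist ?A" for r
    proof -
      have "r \<in> K `` {r}" using r by (simp add: K_def)
      then have "(SOME r'. r' \<in> K `` {r}) \<in> K `` {r}" by (rule someI[where P="\<lambda>r'. r' \<in> K `` {r}"])
      moreover define s where "s = (SOME r'. r' \<in> K `` {r})"
      ultimately have "(r, s) \<in> K" by simp
      then have "Fr s = Fr r" unfolding K_def by simp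
      moreover have "G (K `` {r}) = Fr s" unfolding G_def s_def by (rule refl)
      ultimately show ?thesis by simp
    qed
    have key: "Dmap Fr M = Dmap G (Dmap (\<lambda>x. K `` {x}) M)" if M: "M \<in> Dist (Dist ?A)" for M
    proof -
      have "Dmap G (Dmap (\<lambda>x. K `` {x}) M) = Dmap (\<lambda>x. G (K `` {x})) M"
        by (rule Dmap_comp[OF DistD(2)[OF M]])
      also have "\<dots> = Dmap Fr M"
        by (rule Dmap_cong) (rule G, rule Dist_supp_mem[OF M])
      finally show ?thesis by simp
    qed
    have "Fr (Dmu P) = Fr (Dmu Q)"
      using Fr_Dmu[OF P'] Fr_Dmu[OF Q'] key[OF P'] key[OF Q'] PQ by simp
    then show "(bary (free_cset ?A) P, bary (free_cset ?A) Q) \<in> K"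
      using Dmu_Dist[OF P'] Dmu_Dist[OF Q'] by (simp add: K_def)
  qed
  have Kgens: "tensor_gens X Y \<subseteq> K"
  proof
    fix g assume "g \<in> tensor_gens X Y"
    then consider (l) p y where "g = (delta (bary X p, y), Dmap (\<lambda>x. (x, y)) p)" "p \<in> Dist (carr X)" "y \<in> carr Y"
      | (r) x q where "g = (delta (x, bary Y q), Dmap (\<lambda>y. (x, y)) q)" "x \<in> carr X" "q \<in> Dist (carr Y)"
      unfolding tensor_gens_def by blast
    then show "g \<in> K"
    proof cases
      case l
      have bx: "bary X p \<in> carr X" by (rule cs_bary_in[OF X l(2)])
      have "Fr (delta (bary X p, y)) = f (bary X p) y"
        unfolding Fr_def Dmap_delta using bc_in[OF b bx l(3)] by (simp add: cs_bary_delta[OF Z])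
      also have "\<dots> = bary Z (Dmap (\<lambda>x. f x y) p)" by (rule cm_bary[OF bc_fix1[OF Y b l(3)] l(2)])
      also have "\<dots> = Fr (Dmap (\<lambda>x. (x, y)) p)"
        unfolding Fr_def by (simp add: Dmap_comp[OF DistD(2)[OF l(2)]])
      finally show ?thesis using l bx
        by (auto simp: K_def intro!: delta_Dist Dmap_Dist)
    next
      case r
      have by': "bary Y q \<in> carr Y" by (rule cs_bary_in[OF Y r(3)])
      have "Fr (delta (x, bary Y q)) = f x (bary Y q)"
        unfolding Fr_def Dmap_delta using bc_in[OF b r(2) by'] by (simp add: cs_bary_delta[OF Z])
      also have "\<dots> = bary Z (Dmap (f x) q)" by (rule cm_bary[OF bc_fix2[OF X b r(2)] r(3)])
      also have "\<dots> = Fr (Dmap (\<lambda>y. (x, y)) q)"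
        unfolding Fr_def by (simp add: Dmap_comp[OF DistD(2)[OF r(3)]])
      finally show ?thesis using r by'
        by (auto simp: K_def intro!: delta_Dist Dmap_Dist)
    qed
  qed
  have RK: "tensor_rel X Y \<subseteq> K" by (rule trel_lower[OF Kcong Kgens])
  have Fr_cls: "Fr (trep (tcls X Y r)) = Fr r" if r: "r \<in> Dist ?A" for r
  proof -
    have "tcls X Y (trep (tcls X Y r)) = tcls X Y r" by (rule tcls_trep[OF X Y r])
    then have "(trep (tcls X Y r), r) \<in> tensor_rel X Y"
      using tcls_eq_iff[OF X Y trep_props(1)[OF X Y tcls_in[OF X Y r]] r] by simp
    then show ?thesis using RK by (auto simp: K_def)
  qed
  define h where "h = restrict (\<lambda>t. Fr (trep t)) (carr ?T)"
  have h_cls: "h (tcls X Y r) = Fr r" if r: "r \<in> Dist ?A" for r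
    unfolding h_def using tcls_in[OF X Y r] Fr_cls[OF r] by simp
  have "h \<in> extensional (carr ?T)" unfolding h_def by simp
  moreover have "convex_map ?T Z h"
  proof (rule cm_I)
    fix t assume t: "t \<in> carr ?T"
    show "h t \<in> carr Z" unfolding h_def using t by (simp add: Fr_in trep_props(1)[OF X Y t])
  next
    fix P assume P: "P \<in> Dist (carr ?T)"
    have P': "Dmap trep P \<in> Dist (Dist ?A)" by (rule trep_Dist[OF X Y P])
    have "h (bary ?T P) = Fr (Dmu (Dmap trep P))"
      unfolding bary_tensor by (rule h_cls[OF Dmu_Dist[OF P']])
    also have "\<dots> = bary Z (Dmap Fr (Dmap trep P))" by (rule Fr_Dmu[OF P'])
    also have "Dmap Fr (Dmap trep P) = Dmap (\<lambda>t. Fr (trep t)) P" by (rule Dmap_comp[OF DistD(2)[OF P]])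
    also have "\<dots> = Dmap h P"
      by (rule Dmap_cong) (simp add: h_def Dist_supp_mem[OF P])
    finally show "h (bary ?T P) = bary Z (Dmap h P)" .
  qed
  moreover have "\<forall>x\<in>carr X. \<forall>y\<in>carr Y. h (tens X Y x y) = f x y"
  proof (intro ballI)
    fix x y assume x: "x \<in> carr X" and y: "y \<in> carr Y"
    have "h (tens X Y x y) = Fr (delta (x, y))"
      unfolding tens_tcls by (rule h_cls) (rule delta_Dist, simp add: x y)
    also have "\<dots> = f x y"
      unfolding Fr_def Dmap_delta using bc_in[OF b x y] by (simp add: cs_bary_delta[OF Z])
    finally show "h (tens X Y x y) = f x y" .
  qed
  ultimately show ?thesis by blast
qed

definition lift :: "'x cset \<Rightarrow> 'y cset \<Rightarrow> 'z cset \<Rightarrow> ('x \<Rightarrow> 'y \<Rightarrow> 'z) \<Rightarrow> ('x \<times> 'y \<Rightarrow> real) set \<Rightarrow> 'z" where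
  "lift X Y Z f = (THE h. h \<in> extensional (carr (tensor X Y)) \<and> convex_map (tensor X Y) Z h \<and>
      (\<forall>x\<in>carr X. \<forall>y\<in>carr Y. h (tens X Y x y) = f x y))"

lemma lift_props:
  assumes X: "convex_set X" and Y: "convex_set Y" and Z: "convex_set Z" and b: "biconvex X Y Z f"
  shows "lift X Y Z f \<in> extensional (carr (tensor X Y))"
    and "convex_map (tensor X Y) Z (lift X Y Z f)"
    and "\<And>x y. x \<in> carr X \<Longrightarrow> y \<in> carr Y \<Longrightarrow> lift X Y Z f (tens X Y x y) = f x y"
proof -
  let ?P = "\<lambda>h. h \<in> extensional (carr (tensor X Y)) \<and> convex_map (tensor X Y) Z h \<and>
      (\<forall>x\<in>carr X. \<forall>y\<in>carr Y. h (tens X Y x y) = f x y)"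
  have ex1: "\<exists>!h. ?P h"
  proof (rule ex_ex1I)
    show "\<exists>h. ?P h" by (rule lift_exists[OF X Y Z b])
    fix h1 h2 assume 1: "?P h1" and 2: "?P h2"
    show "h1 = h2"
    proof (rule extensionalityI)
      show "h1 \<in> extensional (carr (tensor X Y))" using 1 by blast
      show "h2 \<in> extensional (carr (tensor X Y))" using 2 by blast
      fix t assume t: "t \<in> carr (tensor X Y)"
      show "h1 t = h2 t"
        by (rule tensor_unique[OF X Y _ _ _ t]) (use 1 2 in auto)
    qed
  qed
  have "?P (lift X Y Z f)" unfolding lift_def by (rule theI'[OF ex1])
  then show "lift X Y Z f \<in> extensional (carr (tensor X Y))"
    and "convex_map (tensor X Y) Z (lift X Y Z f)"
    and "\<And>x y. x \<in> carr X \<Longrightarrow> y \<in> carr Y \<Longrightarrow> lift X Y Z f (tens X Y x y) = f x y" by blast+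
qed

lemma lift_unique:
  assumes X: "convex_set X" and Y: "convex_set Y" and Z: "convex_set Z" and b: "biconvex X Y Z f"
    and h: "convex_map (tensor X Y) Z h" and hf: "\<And>x y. x \<in> carr X \<Longrightarrow> y \<in> carr Y \<Longrightarrow> h (tens X Y x y) = f x y"
    and t: "t \<in> carr (tensor X Y)"
  shows "lift X Y Z f t = h t"
  by (rule tensor_unique[OF X Y lift_props(2)[OF X Y Z b] h _ t]) (simp add: lift_props(3)[OF X Y Z b] hf)

lemma lift_eqI:
  assumes X: "convex_set X" and Y: "convex_set Y" and Z: "convex_set Z" and b: "biconvex X Y Z f"
    and h: "convex_map (tensor X Y) Z h" and hf: "\<And>x y. x \<in> carr X \<Longrightarrow> y \<in> carr Y \<Longrightarrow> h (tens X Y x y) = f x y"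
    and he: "h \<in> extensional (carr (tensor X Y))"
  shows "lift X Y Z f = h"
  by (rule extensionalityI[OF lift_props(1)[OF X Y Z b] he]) (rule lift_unique[OF X Y Z b h hf])


section \<open>Unit, tensor of maps, unitors, associator\<close>

lemma carr_unitC[simp]: "carr unitC = {()}" by (simp add: unitC_def)

lemma unitC_convex: "convex_set unitC"
  by (simp add: convex_set_def unitC_def)

lemma cm_id: "convex_map X X (\<lambda>x. x)"
  by (rule cm_I) (simp_all add: Dmap_id[OF DistD(2)])

lemma bc_pre2:
  assumes b: "biconvex X Y' Z b" and g: "convex_map Y Y' g"
  shows "biconvex X Y Z (\<lambda>x y. b x (g y))"
  using bc_pre[OF b cm_id g] by simp

lemma tmap_props:
  assumes X: "convex_set X" and Y: "convex_set Y" and X': "convex_set X'" and Y': "convex_set Y'"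
    and f: "convex_map X X' f" and g: "convex_map Y Y' g"
  shows "tmap X Y X' Y' f g \<in> extensional (carr (tensor X Y))"
    and "convex_map (tensor X Y) (tensor X' Y') (tmap X Y X' Y' f g)"
    and "\<And>x y. x \<in> carr X \<Longrightarrow> y \<in> carr Y \<Longrightarrow> tmap X Y X' Y' f g (tens X Y x y) = tens X' Y' (f x) (g y)"
proof -
  have eq: "tmap X Y X' Y' f g = lift X Y (tensor X' Y') (\<lambda>x y. tens X' Y' (f x) (g y))"
    by (simp add: tmap_def lift_def)
  have b: "biconvex X Y (tensor X' Y') (\<lambda>x y. tens X' Y' (f x) (g y))"
    by (rule bc_pre[OF tens_biconvex[OF X' Y'] f g])
  note L = lift_props[OF X Y tensor_convex[OF X' Y'] b]
  show "tmap X Y X' Y' f g \<in> extensional (carr (tensor X Y))" unfolding eq by (rule L(1))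
  show "convex_map (tensor X Y) (tensor X' Y') (tmap X Y X' Y' f g)" unfolding eq by (rule L(2))
  show "\<And>x y. x \<in> carr X \<Longrightarrow> y \<in> carr Y \<Longrightarrow> tmap X Y X' Y' f g (tens X Y x y) = tens X' Y' (f x) (g y)"
    unfolding eq by (rule L(3))
qed

lemma lunit_props:
  assumes X: "convex_set X"
  shows "convex_map (tensor unitC X) X (lunit X)"
    and "\<And>x. x \<in> carr X \<Longrightarrow> lunit X (tens unitC X () x) = x"
proof -
  have eq: "lunit X = lift unitC X X (\<lambda>u x. x)"
    by (simp add: lunit_def lift_def)
  have b: "biconvex unitC X X (\<lambda>u x. x)"
  proof (rule bc_I)
    fix p q assume p: "p \<in> Dist (carr unitC)" and q: "q \<in> Dist (carr X)"
    have "Dmap (\<lambda>(u, x). x) (prodist p q) = Dmap snd (prodist p q)"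
      by (rule Dmap_cong) (auto split: prod.splits)
    also have "\<dots> = q" by (rule Dmap_snd_prodist[OF p DistD(2)[OF q]])
    finally show "bary X q = bary X (Dmap (\<lambda>(u, x). x) (prodist p q))" by simp
  qed simp
  note L = lift_props[OF unitC_convex X X b]
  show "convex_map (tensor unitC X) X (lunit X)" unfolding eq by (rule L(2))
  show "\<And>x. x \<in> carr X \<Longrightarrow> lunit X (tens unitC X () x) = x" unfolding eq by (rule L(3)) simp_all
qed

lemma runit_props:
  assumes X: "convex_set X"
  shows "convex_map (tensor X unitC) X (runit X)"
    and "\<And>x. x \<in> carr X \<Longrightarrow> runit X (tens X unitC x ()) = x"
proof -
  have eq: "runit X = lift X unitC X (\<lambda>x u. x)"
    by (simp add: runit_def lift_def)
  have b: "biconvex X unitC X (\<lambda>x u. x)"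
  proof (rule bc_I)
    fix p q assume p: "p \<in> Dist (carr X)" and q: "q \<in> Dist (carr unitC)"
    have "Dmap (\<lambda>(x, u). x) (prodist p q) = Dmap fst (prodist p q)"
      by (rule Dmap_cong) (auto split: prod.splits)
    also have "\<dots> = p" by (rule Dmap_fst_prodist[OF DistD(2)[OF p] q])
    finally show "bary X p = bary X (Dmap (\<lambda>(x, u). x) (prodist p q))" by simp
  qed simp
  note L = lift_props[OF X unitC_convex X b]
  show "convex_map (tensor X unitC) X (runit X)" unfolding eq by (rule L(2))
  show "\<And>x. x \<in> carr X \<Longrightarrow> runit X (tens X unitC x ()) = x" unfolding eq by (rule L(3)) simp_all
qed

lemma uniq3:
  assumes X: "convex_set X" and Y: "convex_set Y" and Z: "convex_set Z"
    and h1: "convex_map (tensor (tensor X Y) Z) W h1" and h2: "convex_map (tensor (tensor X Y) Z) W h2"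
    and eq: "\<And>x y z. x \<in> carr X \<Longrightarrow> y \<in> carr Y \<Longrightarrow> z \<in> carr Z \<Longrightarrow>
       h1 (tens (tensor X Y) Z (tens X Y x y) z) = h2 (tens (tensor X Y) Z (tens X Y x y) z)"
    and t: "t \<in> carr (tensor (tensor X Y) Z)"
  shows "h1 t = h2 t"
proof (rule tensor_unique[OF tensor_convex[OF X Y] Z h1 h2 _ t])
  fix u z assume u: "u \<in> carr (tensor X Y)" and z: "z \<in> carr Z"
  have c: "convex_map (tensor X Y) (tensor (tensor X Y) Z) (\<lambda>u. tens (tensor X Y) Z u z)"
    by (rule bc_fix1[OF Z tens_biconvex[OF tensor_convex[OF X Y] Z] z])
  show "h1 (tens (tensor X Y) Z u z) = h2 (tens (tensor X Y) Z u z)"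
    by (rule tensor_unique[OF X Y cm_comp[OF c h1] cm_comp[OF c h2] _ u]) (rule eq[OF _ _ z])
qed

lemma assocm_props:
  assumes X: "convex_set X" and Y: "convex_set Y" and Z: "convex_set Z"
  shows "assocm X Y Z \<in> extensional (carr (tensor (tensor X Y) Z))"
    and "convex_map (tensor (tensor X Y) Z) (tensor X (tensor Y Z)) (assocm X Y Z)"
    and "\<And>x y z. x \<in> carr X \<Longrightarrow> y \<in> carr Y \<Longrightarrow> z \<in> carr Z \<Longrightarrow>
           assocm X Y Z (tens (tensor X Y) Z (tens X Y x y) z) = tens X (tensor Y Z) x (tens Y Z y z)"
proof -
  let ?XY = "tensor X Y" and ?YZ = "tensor Y Z"
  let ?V = "tensor X ?YZ"
  have XY: "convex_set ?XY" by (rule tensor_convex[OF X Y])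
  have YZ: "convex_set ?YZ" by (rule tensor_convex[OF Y Z])
  have V: "convex_set ?V" by (rule tensor_convex[OF X YZ])
  define phi where "phi z = lift X Y ?V (\<lambda>x y. tens X ?YZ x (tens Y Z y z))" for z
  have bphi: "biconvex X Y ?V (\<lambda>x y. tens X ?YZ x (tens Y Z y z))" if z: "z \<in> carr Z" for z
    by (rule bc_pre2[OF tens_biconvex[OF X YZ] bc_fix1[OF Z tens_biconvex[OF Y Z] z]])
  have phi_cm: "convex_map ?XY ?V (phi z)" if z: "z \<in> carr Z" for z
    unfolding phi_def by (rule lift_props(2)[OF X Y V bphi[OF z]])
  have phi_tens: "phi z (tens X Y x y) = tens X ?YZ x (tens Y Z y z)"
    if "x \<in> carr X" "y \<in> carr Y" "z \<in> carr Z" for x y z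
    unfolding phi_def by (rule lift_props(3)[OF X Y V bphi[OF that(3)] that(1,2)])
  define Phi where "Phi u z = phi z u" for u z
  have bPhi: "biconvex ?XY Z ?V Phi"
  proof (rule bc_sep[OF Z V])
    show "\<And>u z. u \<in> carr ?XY \<Longrightarrow> z \<in> carr Z \<Longrightarrow> Phi u z \<in> carr ?V"
      unfolding Phi_def by (rule cm_in[OF phi_cm])
    show "\<And>z. z \<in> carr Z \<Longrightarrow> convex_map ?XY ?V (\<lambda>u. Phi u z)"
      unfolding Phi_def using phi_cm by simp
    fix u assume u: "u \<in> carr ?XY"
    obtain r where r: "r \<in> Dist (carr X \<times> carr Y)" and ur: "u = tcls X Y r"
      by (rule tensor_cases[OF X Y u])
    have fin: "finite (supp r)" by (rule DistD(2)[OF r])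
    define k where "k a z = tens X ?YZ (fst a) (tens Y Z (snd a) z)" for a z
    have kc: "convex_map Z ?V (k a)" if a: "a \<in> carr X \<times> carr Y" for a
      unfolding k_def
      by (rule cm_comp[OF bc_fix2[OF Y tens_biconvex[OF Y Z]] bc_fix2[OF X tens_biconvex[OF X YZ]]])
         (use a in auto)
    have D: "Dmap (\<lambda>(x, y). tens X Y x y) r \<in> Dist (carr ?XY)"
      by (rule Dmap_Dist[OF r]) (auto intro: tens_in[OF X Y])
    have "Phi u z = bary ?V (Dmap (\<lambda>a. k a z) r)" if z: "z \<in> carr Z" for z
    proof -
      have "Phi u z = bary ?V (Dmap (phi z) (Dmap (\<lambda>(x, y). tens X Y x y) r))"
        unfolding Phi_def ur tcls_as_bary[OF X Y r] by (rule cm_bary[OF phi_cm[OF z] D])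
      also have "Dmap (phi z) (Dmap (\<lambda>(x, y). tens X Y x y) r) = Dmap (\<lambda>a. phi z (case a of (x, y) \<Rightarrow> tens X Y x y)) r"
        by (rule Dmap_comp[OF fin])
      also have "\<dots> = Dmap (\<lambda>a. k a z) r"
      proof (rule Dmap_cong)
        fix a assume "a \<in> supp r"
        then have "a \<in> carr X \<times> carr Y" by (rule Dist_supp_mem[OF r])
        then show "phi z (case a of (x, y) \<Rightarrow> tens X Y x y) = k a z"
          using phi_tens z by (auto simp: k_def split: prod.splits)
      qed
      finally show ?thesis .
    qed
    then show "convex_map Z ?V (Phi u)"
      by (intro cm_cong[OF Z cm_mixfam[OF Z V r kc]]) simp_all
  qed
  define H where "H = lift ?XY Z ?V Phi"
  note HL = lift_props[OF XY Z V bPhi]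
  have H3: "H (tens ?XY Z (tens X Y x y) z) = tens X ?YZ x (tens Y Z y z)"
    if "x \<in> carr X" "y \<in> carr Y" "z \<in> carr Z" for x y z
    unfolding H_def using HL(3)[OF tens_in[OF X Y that(1,2)] that(3)] phi_tens[OF that]
    by (simp add: Phi_def)
  let ?P = "\<lambda>h. h \<in> extensional (carr (tensor ?XY Z)) \<and>
      convex_map (tensor ?XY Z) ?V h \<and>
      (\<forall>x\<in>carr X. \<forall>y\<in>carr Y. \<forall>z\<in>carr Z.
         h (tens ?XY Z (tens X Y x y) z) = tens X ?YZ x (tens Y Z y z))"
  have ex1: "\<exists>!h. ?P h"
  proof (rule ex_ex1I)
    show "\<exists>h. ?P h"
      by (rule exI[of _ H]) (use HL(1,2) H3 in \<open>simp add: H_def\<close>)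
    fix h1 h2 assume 1: "?P h1" and 2: "?P h2"
    show "h1 = h2"
    proof (rule extensionalityI)
      show "h1 \<in> extensional (carr (tensor ?XY Z))" using 1 by blast
      show "h2 \<in> extensional (carr (tensor ?XY Z))" using 2 by blast
      fix t assume t: "t \<in> carr (tensor ?XY Z)"
      show "h1 t = h2 t"
        by (rule uniq3[OF X Y Z _ _ _ t]) (use 1 2 in auto)
    qed
  qed
  have "?P (assocm X Y Z)" unfolding assocm_def by (rule theI'[OF ex1])
  then show "assocm X Y Z \<in> extensional (carr (tensor (tensor X Y) Z))"
    and "convex_map (tensor (tensor X Y) Z) (tensor X (tensor Y Z)) (assocm X Y Z)"
    and "\<And>x y z. x \<in> carr X \<Longrightarrow> y \<in> carr Y \<Longrightarrow> z \<in> carr Z \<Longrightarrow>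
           assocm X Y Z (tens (tensor X Y) Z (tens X Y x y) z) = tens X (tensor Y Z) x (tens Y Z y z)"
    by blast+
qed


section \<open>Enriched categories versus D-algebras in Cat\<close>

lemma carr_ehom[simp]: "carr (ehom E a b) = eHom E a b" by (simp add: ehom_def)
lemma carr_dhom[simp]: "carr (dhom C a b) = dHom C a b" by (simp add: dhom_def)

lemma ecatD1:
  assumes "is_ecat E"
  shows "\<And>a b. a \<in> eOb E \<Longrightarrow> b \<in> eOb E \<Longrightarrow> convex_set (ehom E a b)"
  using assms[unfolded is_ecat_def, THEN conjunct1] by blast

lemma ecatD2:
  assumes "is_ecat E"
  shows "\<And>a b c. a \<in> eOb E \<Longrightarrow> b \<in> eOb E \<Longrightarrow> c \<in> eOb E \<Longrightarrow>
        convex_map (tensor (ehom E b c) (ehom E a b)) (ehom E a c) (eM E a b c)"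
  using assms[unfolded is_ecat_def, THEN conjunct2, THEN conjunct1] by blast

lemma ecatD3:
  assumes "is_ecat E"
  shows "\<And>a. a \<in> eOb E \<Longrightarrow> convex_map unitC (ehom E a a) (eJ E a)"
  using assms[unfolded is_ecat_def, THEN conjunct2, THEN conjunct2, THEN conjunct1] by blast

lemma ecatD4:
  assumes "is_ecat E"
  shows "\<And>a b c d t. a \<in> eOb E \<Longrightarrow> b \<in> eOb E \<Longrightarrow> c \<in> eOb E \<Longrightarrow> d \<in> eOb E \<Longrightarrow>
       t \<in> carr (tensor (tensor (ehom E c d) (ehom E b c)) (ehom E a b)) \<Longrightarrow>
         eM E a b d (tmap (tensor (ehom E c d) (ehom E b c)) (ehom E a b) (ehom E b d) (ehom E a b)
                        (eM E b c d) (idm (ehom E a b)) t)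
       = eM E a c d (tmap (ehom E c d) (tensor (ehom E b c) (ehom E a b)) (ehom E c d) (ehom E a c)
                        (idm (ehom E c d)) (eM E a b c)
                        (assocm (ehom E c d) (ehom E b c) (ehom E a b) t))"
  using assms[unfolded is_ecat_def, THEN conjunct2, THEN conjunct2, THEN conjunct2, THEN conjunct1] by blast

lemma ecatD5:
  assumes "is_ecat E"
  shows "\<And>a b t. a \<in> eOb E \<Longrightarrow> b \<in> eOb E \<Longrightarrow> t \<in> carr (tensor unitC (ehom E a b)) \<Longrightarrow>
         eM E a b b (tmap unitC (ehom E a b) (ehom E b b) (ehom E a b) (eJ E b) (idm (ehom E a b)) t)
       = lunit (ehom E a b) t"
  using assms[unfolded is_ecat_def, THEN conjunct2, THEN conjunct2, THEN conjunct2, THEN conjunct2, THEN conjunct1] by blast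

lemma ecatD6:
  assumes "is_ecat E"
  shows "\<And>a b t. a \<in> eOb E \<Longrightarrow> b \<in> eOb E \<Longrightarrow> t \<in> carr (tensor (ehom E a b) unitC) \<Longrightarrow>
         eM E a a b (tmap (ehom E a b) unitC (ehom E a b) (ehom E a a) (idm (ehom E a b)) (eJ E a) t)
       = runit (ehom E a b) t"
  using assms[unfolded is_ecat_def, THEN conjunct2, THEN conjunct2, THEN conjunct2, THEN conjunct2, THEN conjunct2, THEN conjunct1] by blast

lemma ecatD7:
  assumes "is_ecat E"
  shows "\<And>a b c t. \<not> (a \<in> eOb E \<and> b \<in> eOb E \<and> c \<in> eOb E \<and>
                   t \<in> carr (tensor (ehom E b c) (ehom E a b))) \<Longrightarrow> eM E a b c t = undefined"
  using assms[unfolded is_ecat_def, THEN conjunct2, THEN conjunct2, THEN conjunct2, THEN conjunct2, THEN conjunct2, THEN conjunct2, THEN conjunct1] by blast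

lemma ecatD8:
  assumes "is_ecat E"
  shows "\<And>a. a \<notin> eOb E \<Longrightarrow> eJ E a = (\<lambda>_. undefined)"
  using assms[unfolded is_ecat_def, THEN conjunct2, THEN conjunct2, THEN conjunct2, THEN conjunct2, THEN conjunct2, THEN conjunct2, THEN conjunct2] by blast


lemma dcatD1:
  assumes "is_dcat C"
  shows "\<And>a b. a \<in> dOb C \<Longrightarrow> b \<in> dOb C \<Longrightarrow> convex_set (dhom C a b)"
  using assms[unfolded is_dcat_def, THEN conjunct1] by blast

lemma dcatD2:
  assumes "is_dcat C"
  shows "\<And>a b c g f. a \<in> dOb C \<Longrightarrow> b \<in> dOb C \<Longrightarrow> c \<in> dOb C \<Longrightarrow> g \<in> dHom C b c \<Longrightarrow> f \<in> dHom C a b \<Longrightarrow>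
       dComp C a b c g f \<in> dHom C a c"
  using assms[unfolded is_dcat_def, THEN conjunct2, THEN conjunct1] by blast

lemma dcatD3:
  assumes "is_dcat C"
  shows "\<And>a. a \<in> dOb C \<Longrightarrow> dId C a \<in> dHom C a a"
  using assms[unfolded is_dcat_def, THEN conjunct2, THEN conjunct2, THEN conjunct1] by blast

lemma dcatD4:
  assumes "is_dcat C"
  shows "\<And>a b f. a \<in> dOb C \<Longrightarrow> b \<in> dOb C \<Longrightarrow> f \<in> dHom C a b \<Longrightarrow> dComp C a b b (dId C b) f = f"
  using assms[unfolded is_dcat_def, THEN conjunct2, THEN conjunct2, THEN conjunct2, THEN conjunct1] by blast

lemma dcatD5:
  assumes "is_dcat C"
  shows "\<And>a b f. a \<in> dOb C \<Longrightarrow> b \<in> dOb C \<Longrightarrow> f \<in> dHom C a b \<Longrightarrow> dComp C a a b f (dId C a) = f"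
  using assms[unfolded is_dcat_def, THEN conjunct2, THEN conjunct2, THEN conjunct2, THEN conjunct1] by blast

lemma dcatD6:
  assumes "is_dcat C"
  shows "\<And>a b c d f g h. a \<in> dOb C \<Longrightarrow> b \<in> dOb C \<Longrightarrow> c \<in> dOb C \<Longrightarrow> d \<in> dOb C \<Longrightarrow>
       f \<in> dHom C a b \<Longrightarrow> g \<in> dHom C b c \<Longrightarrow> h \<in> dHom C c d \<Longrightarrow>
       dComp C a c d h (dComp C a b c g f) = dComp C a b d (dComp C b c d h g) f"
  using assms[unfolded is_dcat_def, THEN conjunct2, THEN conjunct2, THEN conjunct2, THEN conjunct2, THEN conjunct1] by blast

lemma dcatD7:
  assumes "is_dcat C"
  shows "\<And>a b c. a \<in> dOb C \<Longrightarrow> b \<in> dOb C \<Longrightarrow> c \<in> dOb C \<Longrightarrow>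
       biconvex (dhom C b c) (dhom C a b) (dhom C a c) (dComp C a b c)"
  using assms[unfolded is_dcat_def, THEN conjunct2, THEN conjunct2, THEN conjunct2, THEN conjunct2, THEN conjunct2, THEN conjunct1] by blast

lemma dcatD8:
  assumes "is_dcat C"
  shows "\<And>a b c g f. \<not> (a \<in> dOb C \<and> b \<in> dOb C \<and> c \<in> dOb C \<and> g \<in> dHom C b c \<and> f \<in> dHom C a b)
       \<Longrightarrow> dComp C a b c g f = undefined"
  using assms[unfolded is_dcat_def, THEN conjunct2, THEN conjunct2, THEN conjunct2, THEN conjunct2, THEN conjunct2, THEN conjunct2, THEN conjunct1] by blast

lemma dcatD9:
  assumes "is_dcat C"
  shows "\<And>a. a \<notin> dOb C \<Longrightarrow> dId C a = undefined"
  using assms[unfolded is_dcat_def, THEN conjunct2, THEN conjunct2, THEN conjunct2, THEN conjunct2, THEN conjunct2, THEN conjunct2, THEN conjunct2] by blast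



lemma ecatI:
  assumes "\<And>a b. a \<in> eOb E \<Longrightarrow> b \<in> eOb E \<Longrightarrow> convex_set (ehom E a b)"
    and "\<And>a b c. a \<in> eOb E \<Longrightarrow> b \<in> eOb E \<Longrightarrow> c \<in> eOb E \<Longrightarrow>
        convex_map (tensor (ehom E b c) (ehom E a b)) (ehom E a c) (eM E a b c)"
    and "\<And>a. a \<in> eOb E \<Longrightarrow> convex_map unitC (ehom E a a) (eJ E a)"
    and "\<And>a b c d t. a \<in> eOb E \<Longrightarrow> b \<in> eOb E \<Longrightarrow> c \<in> eOb E \<Longrightarrow> d \<in> eOb E \<Longrightarrow>
       t \<in> carr (tensor (tensor (ehom E c d) (ehom E b c)) (ehom E a b)) \<Longrightarrow>
         eM E a b d (tmap (tensor (ehom E c d) (ehom E b c)) (ehom E a b) (ehom E b d) (ehom E a b)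
                        (eM E b c d) (idm (ehom E a b)) t)
       = eM E a c d (tmap (ehom E c d) (tensor (ehom E b c) (ehom E a b)) (ehom E c d) (ehom E a c)
                        (idm (ehom E c d)) (eM E a b c)
                        (assocm (ehom E c d) (ehom E b c) (ehom E a b) t))"
    and "\<And>a b t. a \<in> eOb E \<Longrightarrow> b \<in> eOb E \<Longrightarrow> t \<in> carr (tensor unitC (ehom E a b)) \<Longrightarrow>
         eM E a b b (tmap unitC (ehom E a b) (ehom E b b) (ehom E a b) (eJ E b) (idm (ehom E a b)) t)
       = lunit (ehom E a b) t"
    and "\<And>a b t. a \<in> eOb E \<Longrightarrow> b \<in> eOb E \<Longrightarrow> t \<in> carr (tensor (ehom E a b) unitC) \<Longrightarrow>
         eM E a a b (tmap (ehom E a b) unitC (ehom E a b) (ehom E a a) (idm (ehom E a b)) (eJ E a) t)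
       = runit (ehom E a b) t"
    and "\<And>a b c t. \<not> (a \<in> eOb E \<and> b \<in> eOb E \<and> c \<in> eOb E \<and>
                   t \<in> carr (tensor (ehom E b c) (ehom E a b))) \<Longrightarrow> eM E a b c t = undefined"
    and "\<And>a. a \<notin> eOb E \<Longrightarrow> eJ E a = (\<lambda>_. undefined)"
  shows "is_ecat E"
  unfolding is_ecat_def by (intro conjI ballI allI impI; (rule assms; assumption)?)

lemma dcatI:
  assumes "\<And>a b. a \<in> dOb C \<Longrightarrow> b \<in> dOb C \<Longrightarrow> convex_set (dhom C a b)"
    and "\<And>a b c g f. a \<in> dOb C \<Longrightarrow> b \<in> dOb C \<Longrightarrow> c \<in> dOb C \<Longrightarrow> g \<in> dHom C b c \<Longrightarrow> f \<in> dHom C a b \<Longrightarrow>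
       dComp C a b c g f \<in> dHom C a c"
    and "\<And>a. a \<in> dOb C \<Longrightarrow> dId C a \<in> dHom C a a"
    and "\<And>a b f. a \<in> dOb C \<Longrightarrow> b \<in> dOb C \<Longrightarrow> f \<in> dHom C a b \<Longrightarrow> dComp C a b b (dId C b) f = f"
    and "\<And>a b f. a \<in> dOb C \<Longrightarrow> b \<in> dOb C \<Longrightarrow> f \<in> dHom C a b \<Longrightarrow> dComp C a a b f (dId C a) = f"
    and "\<And>a b c d f g h. a \<in> dOb C \<Longrightarrow> b \<in> dOb C \<Longrightarrow> c \<in> dOb C \<Longrightarrow> d \<in> dOb C \<Longrightarrow>
       f \<in> dHom C a b \<Longrightarrow> g \<in> dHom C b c \<Longrightarrow> h \<in> dHom C c d \<Longrightarrow>
       dComp C a c d h (dComp C a b c g f) = dComp C a b d (dComp C b c d h g) f"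
    and "\<And>a b c. a \<in> dOb C \<Longrightarrow> b \<in> dOb C \<Longrightarrow> c \<in> dOb C \<Longrightarrow>
       biconvex (dhom C b c) (dhom C a b) (dhom C a c) (dComp C a b c)"
    and "\<And>a b c g f. \<not> (a \<in> dOb C \<and> b \<in> dOb C \<and> c \<in> dOb C \<and> g \<in> dHom C b c \<and> f \<in> dHom C a b)
       \<Longrightarrow> dComp C a b c g f = undefined"
    and "\<And>a. a \<notin> dOb C \<Longrightarrow> dId C a = undefined"
  shows "is_dcat C"
  unfolding is_dcat_def by (intro conjI ballI allI impI; (rule assms; assumption)?)


lemma efunD1:
  assumes "is_efun E E' Fo Fh"
  shows "\<And>a. a \<in> eOb E \<Longrightarrow> Fo a \<in> eOb E'"
  using assms[unfolded is_efun_def, THEN conjunct1] by blast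

lemma efunD2:
  assumes "is_efun E E' Fo Fh"
  shows "\<And>a b. a \<in> eOb E \<Longrightarrow> b \<in> eOb E \<Longrightarrow> convex_map (ehom E a b) (ehom E' (Fo a) (Fo b)) (Fh a b)"
  using assms[unfolded is_efun_def, THEN conjunct2, THEN conjunct1] by blast

lemma efunD3:
  assumes "is_efun E E' Fo Fh"
  shows "\<And>a b c t. a \<in> eOb E \<Longrightarrow> b \<in> eOb E \<Longrightarrow> c \<in> eOb E \<Longrightarrow> t \<in> carr (tensor (ehom E b c) (ehom E a b)) \<Longrightarrow>
       Fh a c (eM E a b c t)
       = eM E' (Fo a) (Fo b) (Fo c)
           (tmap (ehom E b c) (ehom E a b) (ehom E' (Fo b) (Fo c)) (ehom E' (Fo a) (Fo b))
                 (Fh b c) (Fh a b) t)"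
  using assms[unfolded is_efun_def, THEN conjunct2, THEN conjunct2, THEN conjunct1] by blast

lemma efunD4:
  assumes "is_efun E E' Fo Fh"
  shows "\<And>a. a \<in> eOb E \<Longrightarrow> Fh a a (eJ E a ()) = eJ E' (Fo a) ()"
  using assms[unfolded is_efun_def, THEN conjunct2, THEN conjunct2, THEN conjunct2, THEN conjunct1] by blast

lemma efunD5:
  assumes "is_efun E E' Fo Fh"
  shows "\<And>a. a \<notin> eOb E \<Longrightarrow> Fo a = undefined"
  using assms[unfolded is_efun_def, THEN conjunct2, THEN conjunct2, THEN conjunct2, THEN conjunct2, THEN conjunct1] by blast

lemma efunD6:
  assumes "is_efun E E' Fo Fh"
  shows "\<And>a b f. \<not> (a \<in> eOb E \<and> b \<in> eOb E \<and> f \<in> eHom E a b) \<Longrightarrow> Fh a b f = undefined"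
  using assms[unfolded is_efun_def, THEN conjunct2, THEN conjunct2, THEN conjunct2, THEN conjunct2, THEN conjunct2] by blast

lemma efunI:
  assumes "\<And>a. a \<in> eOb E \<Longrightarrow> Fo a \<in> eOb E'"
    and "\<And>a b. a \<in> eOb E \<Longrightarrow> b \<in> eOb E \<Longrightarrow> convex_map (ehom E a b) (ehom E' (Fo a) (Fo b)) (Fh a b)"
    and "\<And>a b c t. a \<in> eOb E \<Longrightarrow> b \<in> eOb E \<Longrightarrow> c \<in> eOb E \<Longrightarrow> t \<in> carr (tensor (ehom E b c) (ehom E a b)) \<Longrightarrow>
       Fh a c (eM E a b c t)
       = eM E' (Fo a) (Fo b) (Fo c)
           (tmap (ehom E b c) (ehom E a b) (ehom E' (Fo b) (Fo c)) (ehom E' (Fo a) (Fo b))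
                 (Fh b c) (Fh a b) t)"
    and "\<And>a. a \<in> eOb E \<Longrightarrow> Fh a a (eJ E a ()) = eJ E' (Fo a) ()"
    and "\<And>a. a \<notin> eOb E \<Longrightarrow> Fo a = undefined"
    and "\<And>a b f. \<not> (a \<in> eOb E \<and> b \<in> eOb E \<and> f \<in> eHom E a b) \<Longrightarrow> Fh a b f = undefined"
  shows "is_efun E E' Fo Fh"
  unfolding is_efun_def by (intro conjI ballI allI impI; (rule assms; assumption)?)

lemma dfunD1:
  assumes "is_dfun C C' Fo Fh"
  shows "\<And>a. a \<in> dOb C \<Longrightarrow> Fo a \<in> dOb C'"
  using assms[unfolded is_dfun_def, THEN conjunct1] by blast

lemma dfunD2:
  assumes "is_dfun C C' Fo Fh"
  shows "\<And>a b f. a \<in> dOb C \<Longrightarrow> b \<in> dOb C \<Longrightarrow> f \<in> dHom C a b \<Longrightarrow> Fh a b f \<in> dHom C' (Fo a) (Fo b)"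
  using assms[unfolded is_dfun_def, THEN conjunct2, THEN conjunct1] by blast

lemma dfunD3:
  assumes "is_dfun C C' Fo Fh"
  shows "\<And>a b c g f. a \<in> dOb C \<Longrightarrow> b \<in> dOb C \<Longrightarrow> c \<in> dOb C \<Longrightarrow> g \<in> dHom C b c \<Longrightarrow> f \<in> dHom C a b \<Longrightarrow>
       Fh a c (dComp C a b c g f) = dComp C' (Fo a) (Fo b) (Fo c) (Fh b c g) (Fh a b f)"
  using assms[unfolded is_dfun_def, THEN conjunct2, THEN conjunct2, THEN conjunct1] by blast

lemma dfunD4:
  assumes "is_dfun C C' Fo Fh"
  shows "\<And>a. a \<in> dOb C \<Longrightarrow> Fh a a (dId C a) = dId C' (Fo a)"
  using assms[unfolded is_dfun_def, THEN conjunct2, THEN conjunct2, THEN conjunct2, THEN conjunct1] by blast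

lemma dfunD5:
  assumes "is_dfun C C' Fo Fh"
  shows "\<And>a b. a \<in> dOb C \<Longrightarrow> b \<in> dOb C \<Longrightarrow> convex_map (dhom C a b) (dhom C' (Fo a) (Fo b)) (Fh a b)"
  using assms[unfolded is_dfun_def, THEN conjunct2, THEN conjunct2, THEN conjunct2, THEN conjunct2, THEN conjunct1] by blast

lemma dfunD6:
  assumes "is_dfun C C' Fo Fh"
  shows "\<And>a. a \<notin> dOb C \<Longrightarrow> Fo a = undefined"
  using assms[unfolded is_dfun_def, THEN conjunct2, THEN conjunct2, THEN conjunct2, THEN conjunct2, THEN conjunct2, THEN conjunct1] by blast

lemma dfunD7:
  assumes "is_dfun C C' Fo Fh"
  shows "\<And>a b f. \<not> (a \<in> dOb C \<and> b \<in> dOb C \<and> f \<in> dHom C a b) \<Longrightarrow> Fh a b f = undefined"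
  using assms[unfolded is_dfun_def, THEN conjunct2, THEN conjunct2, THEN conjunct2, THEN conjunct2, THEN conjunct2, THEN conjunct2] by blast

lemma dfunI:
  assumes "\<And>a. a \<in> dOb C \<Longrightarrow> Fo a \<in> dOb C'"
    and "\<And>a b f. a \<in> dOb C \<Longrightarrow> b \<in> dOb C \<Longrightarrow> f \<in> dHom C a b \<Longrightarrow> Fh a b f \<in> dHom C' (Fo a) (Fo b)"
    and "\<And>a b c g f. a \<in> dOb C \<Longrightarrow> b \<in> dOb C \<Longrightarrow> c \<in> dOb C \<Longrightarrow> g \<in> dHom C b c \<Longrightarrow> f \<in> dHom C a b \<Longrightarrow>
       Fh a c (dComp C a b c g f) = dComp C' (Fo a) (Fo b) (Fo c) (Fh b c g) (Fh a b f)"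
    and "\<And>a. a \<in> dOb C \<Longrightarrow> Fh a a (dId C a) = dId C' (Fo a)"
    and "\<And>a b. a \<in> dOb C \<Longrightarrow> b \<in> dOb C \<Longrightarrow> convex_map (dhom C a b) (dhom C' (Fo a) (Fo b)) (Fh a b)"
    and "\<And>a. a \<notin> dOb C \<Longrightarrow> Fo a = undefined"
    and "\<And>a b f. \<not> (a \<in> dOb C \<and> b \<in> dOb C \<and> f \<in> dHom C a b) \<Longrightarrow> Fh a b f = undefined"
  shows "is_dfun C C' Fo Fh"
  unfolding is_dfun_def by (intro conjI ballI allI impI; (rule assms; assumption)?)


definition toD :: "('o, 'h) ecat \<Rightarrow> ('o, 'h) dcat" where
  "toD E = \<lparr>dOb = eOb E, dHom = eHom E, dBary = eBary E,
     dComp = (\<lambda>a b c g f. if a \<in> eOb E \<and> b \<in> eOb E \<and> c \<in> eOb E \<and> g \<in> eHom E b c \<and> f \<in> eHom E a b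
                then eM E a b c (tens (ehom E b c) (ehom E a b) g f) else undefined),
     dId = (\<lambda>a. eJ E a ())\<rparr>"

definition toE :: "('o, 'h) dcat \<Rightarrow> ('o, 'h) ecat" where
  "toE C = \<lparr>eOb = dOb C, eHom = dHom C, eBary = dBary C,
     eM = (\<lambda>a b c. if a \<in> dOb C \<and> b \<in> dOb C \<and> c \<in> dOb C
                then lift (dhom C b c) (dhom C a b) (dhom C a c) (dComp C a b c) else (\<lambda>_. undefined)),
     eJ = (\<lambda>a _. dId C a)\<rparr>"

lemma toD_simps[simp]:
  "dOb (toD E) = eOb E" "dHom (toD E) = eHom E" "dBary (toD E) = eBary E" "dId (toD E) a = eJ E a ()"
  by (simp_all add: toD_def)

lemma dhom_toD[simp]: "dhom (toD E) a b = ehom E a b"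
  by (simp add: dhom_def ehom_def toD_def)

lemma toD_comp:
  "a \<in> eOb E \<Longrightarrow> b \<in> eOb E \<Longrightarrow> c \<in> eOb E \<Longrightarrow> g \<in> eHom E b c \<Longrightarrow> f \<in> eHom E a b \<Longrightarrow>
   dComp (toD E) a b c g f = eM E a b c (tens (ehom E b c) (ehom E a b) g f)"
  by (simp add: toD_def)

lemma toE_simps[simp]:
  "eOb (toE C) = dOb C" "eHom (toE C) = dHom C" "eBary (toE C) = dBary C" "eJ (toE C) a = (\<lambda>_. dId C a)"
  by (simp_all add: toE_def)

lemma ehom_toE[simp]: "ehom (toE C) a b = dhom C a b"
  by (simp add: dhom_def ehom_def toE_def)

lemma toE_M:
  "a \<in> dOb C \<Longrightarrow> b \<in> dOb C \<Longrightarrow> c \<in> dOb C \<Longrightarrow>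
   eM (toE C) a b c = lift (dhom C b c) (dhom C a b) (dhom C a c) (dComp C a b c)"
  by (simp add: toE_def)

lemma ecat_to_dcat:
  assumes E: "is_ecat E"
  shows "is_dcat (toD E)"
proof -
  note H = ecatD1[OF E] and M = ecatD2[OF E] and J = ecatD3[OF E]
  have Jin: "eJ E a () \<in> eHom E a a" if "a \<in> eOb E" for a
    using cm_in[OF J[OF that], of "()"] by simp
  have Min: "eM E a b c (tens (ehom E b c) (ehom E a b) g f) \<in> eHom E a c"
    if "a \<in> eOb E" "b \<in> eOb E" "c \<in> eOb E" "g \<in> eHom E b c" "f \<in> eHom E a b" for a b c g f
    using cm_in[OF M[OF that(1-3)] tens_in[OF H[OF that(2,3)] H[OF that(1,2)]]] that(4,5) by simp
  show ?thesis
  proof (rule dcatI)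
    fix a b assume "a \<in> dOb (toD E)" "b \<in> dOb (toD E)"
    then show "convex_set (dhom (toD E) a b)" using H by simp
  next
    fix a b c g f assume "a \<in> dOb (toD E)" "b \<in> dOb (toD E)" "c \<in> dOb (toD E)"
      "g \<in> dHom (toD E) b c" "f \<in> dHom (toD E) a b"
    then show "dComp (toD E) a b c g f \<in> dHom (toD E) a c" using Min by (simp add: toD_comp)
  next
    fix a assume "a \<in> dOb (toD E)"
    then show "dId (toD E) a \<in> dHom (toD E) a a" using Jin by simp
  next
    fix a b f assume a: "a \<in> dOb (toD E)" and b: "b \<in> dOb (toD E)" and f: "f \<in> dHom (toD E) a b"
    then have a: "a \<in> eOb E" and b: "b \<in> eOb E" and f: "f \<in> eHom E a b" by simp_all
    let ?A = "ehom E a b" and ?B = "ehom E b b"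
    have t: "tens unitC ?A () f \<in> carr (tensor unitC ?A)"
      by (rule tens_in[OF unitC_convex H[OF a b]]) (simp_all add: f)
    have "eM E a b b (tens ?B ?A (eJ E b ()) f)
        = eM E a b b (tmap unitC ?A ?B ?A (eJ E b) (idm ?A) (tens unitC ?A () f))"
      using tmap_props(3)[OF unitC_convex H[OF a b] H[OF b b] H[OF a b] J[OF b] cm_idm[OF H[OF a b]], of "()" f] f
      by (simp add: idm_def)
    also have "\<dots> = lunit ?A (tens unitC ?A () f)" by (rule ecatD5[OF E a b t])
    also have "\<dots> = f" using lunit_props(2)[OF H[OF a b]] f by simp
    finally show "dComp (toD E) a b b (dId (toD E) b) f = f"
      using a b f Jin[OF b] by (simp add: toD_comp)
  next
    fix a b f assume a: "a \<in> dOb (toD E)" and b: "b \<in> dOb (toD E)" and f: "f \<in> dHom (toD E) a b"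
    then have a: "a \<in> eOb E" and b: "b \<in> eOb E" and f: "f \<in> eHom E a b" by simp_all
    let ?A = "ehom E a b" and ?B = "ehom E a a"
    have t: "tens ?A unitC f () \<in> carr (tensor ?A unitC)"
      by (rule tens_in[OF H[OF a b] unitC_convex]) (simp_all add: f)
    have "eM E a a b (tens ?A ?B f (eJ E a ()))
        = eM E a a b (tmap ?A unitC ?A ?B (idm ?A) (eJ E a) (tens ?A unitC f ()))"
      using tmap_props(3)[OF H[OF a b] unitC_convex H[OF a b] H[OF a a] cm_idm[OF H[OF a b]] J[OF a], of f "()"] f
      by (simp add: idm_def)
    also have "\<dots> = runit ?A (tens ?A unitC f ())" by (rule ecatD6[OF E a b t])
    also have "\<dots> = f" using runit_props(2)[OF H[OF a b]] f by simp
    finally show "dComp (toD E) a a b f (dId (toD E) a) = f"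
      using a b f Jin[OF a] by (simp add: toD_comp)
  next
    fix a b c d f g h
    assume "a \<in> dOb (toD E)" "b \<in> dOb (toD E)" "c \<in> dOb (toD E)" "d \<in> dOb (toD E)"
      "f \<in> dHom (toD E) a b" "g \<in> dHom (toD E) b c" "h \<in> dHom (toD E) c d"
    then have a: "a \<in> eOb E" and b: "b \<in> eOb E" and c: "c \<in> eOb E" and d: "d \<in> eOb E"
      and f: "f \<in> eHom E a b" and g: "g \<in> eHom E b c" and h: "h \<in> eHom E c d" by simp_all
    let ?X1 = "ehom E c d" and ?X2 = "ehom E b c" and ?X3 = "ehom E a b"
    have X1: "convex_set ?X1" by (rule H[OF c d])
    have X2: "convex_set ?X2" by (rule H[OF b c])
    have X3: "convex_set ?X3" by (rule H[OF a b])
    have X12: "convex_set (tensor ?X1 ?X2)" by (rule tensor_convex[OF X1 X2])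
    have X23: "convex_set (tensor ?X2 ?X3)" by (rule tensor_convex[OF X2 X3])
    have hg: "tens ?X1 ?X2 h g \<in> carr (tensor ?X1 ?X2)" by (rule tens_in[OF X1 X2]) (simp_all add: g h)
    have gf: "tens ?X2 ?X3 g f \<in> carr (tensor ?X2 ?X3)" by (rule tens_in[OF X2 X3]) (simp_all add: f g)
    define t where "t = tens (tensor ?X1 ?X2) ?X3 (tens ?X1 ?X2 h g) f"
    have t: "t \<in> carr (tensor (tensor ?X1 ?X2) ?X3)"
      unfolding t_def by (rule tens_in[OF X12 X3 hg]) (simp add: f)
    have L: "tmap (tensor ?X1 ?X2) ?X3 (ehom E b d) ?X3 (eM E b c d) (idm ?X3) t
        = tens (ehom E b d) ?X3 (eM E b c d (tens ?X1 ?X2 h g)) f"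
      unfolding t_def
      using tmap_props(3)[OF X12 X3 H[OF b d] X3 M[OF b c d] cm_idm[OF X3] hg, of f] f
      by (simp add: idm_def)
    have R1: "assocm ?X1 ?X2 ?X3 t = tens ?X1 (tensor ?X2 ?X3) h (tens ?X2 ?X3 g f)"
      unfolding t_def by (rule assocm_props(3)[OF X1 X2 X3]) (simp_all add: f g h)
    have R2: "tmap ?X1 (tensor ?X2 ?X3) ?X1 (ehom E a c) (idm ?X1) (eM E a b c) (tens ?X1 (tensor ?X2 ?X3) h (tens ?X2 ?X3 g f))
        = tens ?X1 (ehom E a c) h (eM E a b c (tens ?X2 ?X3 g f))"
      using tmap_props(3)[OF X1 X23 X1 H[OF a c] cm_idm[OF X1] M[OF a b c], of h, OF _ gf] h
      by (simp add: idm_def)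
    have "eM E a b d (tens (ehom E b d) ?X3 (eM E b c d (tens ?X1 ?X2 h g)) f)
        = eM E a c d (tens ?X1 (ehom E a c) h (eM E a b c (tens ?X2 ?X3 g f)))"
      using ecatD4[OF E a b c d t] L R1 R2 by simp
    then show "dComp (toD E) a c d h (dComp (toD E) a b c g f) = dComp (toD E) a b d (dComp (toD E) b c d h g) f"
      using a b c d f g h Min by (simp add: toD_comp)
  next
    fix a b c assume "a \<in> dOb (toD E)" "b \<in> dOb (toD E)" "c \<in> dOb (toD E)"
    then have a: "a \<in> eOb E" and b: "b \<in> eOb E" and c: "c \<in> eOb E" by simp_all
    have "biconvex (ehom E b c) (ehom E a b) (ehom E a c) (dComp (toD E) a b c)"
      by (rule bc_cong[OF H[OF b c] H[OF a b] bc_post[OF tens_biconvex[OF H[OF b c] H[OF a b]] M[OF a b c]]])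
         (simp add: toD_comp a b c)
    then show "biconvex (dhom (toD E) b c) (dhom (toD E) a b) (dhom (toD E) a c) (dComp (toD E) a b c)"
      by simp
  next
    fix a b c g f
    assume "\<not> (a \<in> dOb (toD E) \<and> b \<in> dOb (toD E) \<and> c \<in> dOb (toD E) \<and> g \<in> dHom (toD E) b c \<and> f \<in> dHom (toD E) a b)"
    then show "dComp (toD E) a b c g f = undefined" unfolding toD_def by auto
  next
    fix a assume "a \<notin> dOb (toD E)"
    then show "dId (toD E) a = undefined" using ecatD8[OF E, of a] by simp
  qed
qed


lemma dcat_Jcm:
  assumes C: "is_dcat C" and a: "a \<in> dOb C"
  shows "convex_map X (dhom C a a) (\<lambda>_. dId C a)"
  by (rule cm_const[OF dcatD1[OF C a a]]) (simp add: dcatD3[OF C a])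

lemma dcat_to_ecat:
  assumes C: "is_dcat C"
  shows "is_ecat (toE C)"
proof -
  note H = dcatD1[OF C]
  have Mcm: "convex_map (tensor (dhom C b c) (dhom C a b)) (dhom C a c) (eM (toE C) a b c)"
    if "a \<in> dOb C" "b \<in> dOb C" "c \<in> dOb C" for a b c
    unfolding toE_M[OF that]
    by (rule lift_props(2)[OF H[OF that(2,3)] H[OF that(1,2)] H[OF that(1,3)] dcatD7[OF C that]])
  have Mt: "eM (toE C) a b c (tens (dhom C b c) (dhom C a b) g f) = dComp C a b c g f"
    if "a \<in> dOb C" "b \<in> dOb C" "c \<in> dOb C" "g \<in> dHom C b c" "f \<in> dHom C a b" for a b c g f
    unfolding toE_M[OF that(1-3)]
    by (rule lift_props(3)[OF H[OF that(2,3)] H[OF that(1,2)] H[OF that(1,3)] dcatD7[OF C that(1-3)]])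
       (simp_all add: that)
  have Min: "dComp C a b c g f \<in> dHom C a c"
    if "a \<in> dOb C" "b \<in> dOb C" "c \<in> dOb C" "g \<in> dHom C b c" "f \<in> dHom C a b" for a b c g f
    by (rule dcatD2[OF C that])
  show ?thesis
    apply (rule ecatI)
           apply (simp_all only: toE_simps ehom_toE)
    subgoal for a b by (rule H)
    subgoal for a b c by (rule Mcm)
    subgoal for a by (rule dcat_Jcm[OF C])
    subgoal premises prems for a b c d t
    proof -
      have a: "a \<in> dOb C" and b: "b \<in> dOb C" and c: "c \<in> dOb C" and d: "d \<in> dOb C"
        using prems by simp_all
      have t: "t \<in> carr (tensor (tensor (dhom C c d) (dhom C b c)) (dhom C a b))" using prems by simp
      let ?X1 = "dhom C c d" and ?X2 = "dhom C b c" and ?X3 = "dhom C a b"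
      have X1: "convex_set ?X1" by (rule H[OF c d])
      have X2: "convex_set ?X2" by (rule H[OF b c])
      have X3: "convex_set ?X3" by (rule H[OF a b])
      have X12: "convex_set (tensor ?X1 ?X2)" by (rule tensor_convex[OF X1 X2])
      have X23: "convex_set (tensor ?X2 ?X3)" by (rule tensor_convex[OF X2 X3])
      have F1: "convex_map (tensor (tensor ?X1 ?X2) ?X3) (dhom C a d)
          (\<lambda>t. eM (toE C) a b d (tmap (tensor ?X1 ?X2) ?X3 (dhom C b d) ?X3 (eM (toE C) b c d) (idm ?X3) t))"
        by (rule cm_comp[OF tmap_props(2)[OF X12 X3 H[OF b d] X3 Mcm[OF b c d] cm_idm[OF X3]] Mcm[OF a b d]])
      have F2: "convex_map (tensor (tensor ?X1 ?X2) ?X3) (dhom C a d)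
          (\<lambda>t. eM (toE C) a c d (tmap ?X1 (tensor ?X2 ?X3) ?X1 (dhom C a c) (idm ?X1) (eM (toE C) a b c)
                 (assocm ?X1 ?X2 ?X3 t)))"
        by (rule cm_comp[OF assocm_props(2)[OF X1 X2 X3]
              cm_comp[OF tmap_props(2)[OF X1 X23 X1 H[OF a c] cm_idm[OF X1] Mcm[OF a b c]] Mcm[OF a c d]]])
      show ?thesis
      proof (rule uniq3[OF X1 X2 X3 F1 F2 _ t])
        fix h g f assume h: "h \<in> carr ?X1" and g: "g \<in> carr ?X2" and f: "f \<in> carr ?X3"
        have hg: "tens ?X1 ?X2 h g \<in> carr (tensor ?X1 ?X2)" by (rule tens_in[OF X1 X2 h g])
        have gf: "tens ?X2 ?X3 g f \<in> carr (tensor ?X2 ?X3)" by (rule tens_in[OF X2 X3 g f])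
        have hC: "h \<in> dHom C c d" and gC: "g \<in> dHom C b c" and fC: "f \<in> dHom C a b" using h g f by simp_all
        have "eM (toE C) a b d (tmap (tensor ?X1 ?X2) ?X3 (dhom C b d) ?X3 (eM (toE C) b c d) (idm ?X3)
               (tens (tensor ?X1 ?X2) ?X3 (tens ?X1 ?X2 h g) f))
            = eM (toE C) a b d (tens (dhom C b d) ?X3 (dComp C b c d h g) f)"
          using tmap_props(3)[OF X12 X3 H[OF b d] X3 Mcm[OF b c d] cm_idm[OF X3] hg f] f
          by (simp add: idm_def Mt[OF b c d hC gC])
        also have "\<dots> = dComp C a b d (dComp C b c d h g) f"
          by (rule Mt[OF a b d Min[OF b c d hC gC] fC])
        also have "\<dots> = dComp C a c d h (dComp C a b c g f)"
          by (rule dcatD6[OF C a b c d fC gC hC, symmetric])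
        also have "\<dots> = eM (toE C) a c d (tens ?X1 (dhom C a c) h (dComp C a b c g f))"
          by (rule Mt[OF a c d hC Min[OF a b c gC fC], symmetric])
        also have "\<dots> = eM (toE C) a c d (tmap ?X1 (tensor ?X2 ?X3) ?X1 (dhom C a c) (idm ?X1) (eM (toE C) a b c)
               (assocm ?X1 ?X2 ?X3 (tens (tensor ?X1 ?X2) ?X3 (tens ?X1 ?X2 h g) f)))"
          using assocm_props(3)[OF X1 X2 X3 h g f]
            tmap_props(3)[OF X1 X23 X1 H[OF a c] cm_idm[OF X1] Mcm[OF a b c] h gf] h
          by (simp add: idm_def Mt[OF a b c gC fC])
        finally show "eM (toE C) a b d (tmap (tensor ?X1 ?X2) ?X3 (dhom C b d) ?X3 (eM (toE C) b c d) (idm ?X3)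
               (tens (tensor ?X1 ?X2) ?X3 (tens ?X1 ?X2 h g) f))
            = eM (toE C) a c d (tmap ?X1 (tensor ?X2 ?X3) ?X1 (dhom C a c) (idm ?X1) (eM (toE C) a b c)
               (assocm ?X1 ?X2 ?X3 (tens (tensor ?X1 ?X2) ?X3 (tens ?X1 ?X2 h g) f)))" .
      qed
    qed
    subgoal premises prems for a b t
    proof -
      have a: "a \<in> dOb C" and b: "b \<in> dOb C" using prems by simp_all
      have t: "t \<in> carr (tensor unitC (dhom C a b))" using prems by simp
      let ?A = "dhom C a b" and ?B = "dhom C b b"
      have A: "convex_set ?A" by (rule H[OF a b])
      have F1: "convex_map (tensor unitC ?A) ?A
          (\<lambda>t. eM (toE C) a b b (tmap unitC ?A ?B ?A (\<lambda>_. dId C b) (idm ?A) t))"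
        by (rule cm_comp[OF tmap_props(2)[OF unitC_convex A H[OF b b] A dcat_Jcm[OF C b] cm_idm[OF A]] Mcm[OF a b b]])
      show ?thesis
      proof (rule tensor_unique[OF unitC_convex A F1 lunit_props(1)[OF A] _ t])
        fix u f assume u: "u \<in> carr unitC" and f: "f \<in> carr ?A"
        have u0: "u = ()" by simp
        have fC: "f \<in> dHom C a b" using f by simp
        have "eM (toE C) a b b (tmap unitC ?A ?B ?A (\<lambda>_. dId C b) (idm ?A) (tens unitC ?A u f))
            = eM (toE C) a b b (tens ?B ?A (dId C b) f)"
          using tmap_props(3)[OF unitC_convex A H[OF b b] A dcat_Jcm[OF C b] cm_idm[OF A] u f] f
          by (simp add: idm_def)
        also have "\<dots> = dComp C a b b (dId C b) f" by (rule Mt[OF a b b dcatD3[OF C b] fC])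
        also have "\<dots> = f" by (rule dcatD4[OF C a b fC])
        also have "\<dots> = lunit ?A (tens unitC ?A u f)" using lunit_props(2)[OF A f] u0 by simp
        finally show "eM (toE C) a b b (tmap unitC ?A ?B ?A (\<lambda>_. dId C b) (idm ?A) (tens unitC ?A u f))
            = lunit ?A (tens unitC ?A u f)" .
      qed
    qed
    subgoal premises prems for a b t
    proof -
      have a: "a \<in> dOb C" and b: "b \<in> dOb C" using prems by simp_all
      have t: "t \<in> carr (tensor (dhom C a b) unitC)" using prems by simp
      let ?A = "dhom C a b" and ?B = "dhom C a a"
      have A: "convex_set ?A" by (rule H[OF a b])
      have F1: "convex_map (tensor ?A unitC) ?A
          (\<lambda>t. eM (toE C) a a b (tmap ?A unitC ?A ?B (idm ?A) (\<lambda>_. dId C a) t))"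
        by (rule cm_comp[OF tmap_props(2)[OF A unitC_convex A H[OF a a] cm_idm[OF A] dcat_Jcm[OF C a]] Mcm[OF a a b]])
      show ?thesis
      proof (rule tensor_unique[OF A unitC_convex F1 runit_props(1)[OF A] _ t])
        fix f u assume f: "f \<in> carr ?A" and u: "u \<in> carr unitC"
        have u0: "u = ()" by simp
        have fC: "f \<in> dHom C a b" using f by simp
        have "eM (toE C) a a b (tmap ?A unitC ?A ?B (idm ?A) (\<lambda>_. dId C a) (tens ?A unitC f u))
            = eM (toE C) a a b (tens ?A ?B f (dId C a))"
          using tmap_props(3)[OF A unitC_convex A H[OF a a] cm_idm[OF A] dcat_Jcm[OF C a] f u] f
          by (simp add: idm_def)
        also have "\<dots> = dComp C a a b f (dId C a)" by (rule Mt[OF a a b fC dcatD3[OF C a]])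
        also have "\<dots> = f" by (rule dcatD5[OF C a b fC])
        also have "\<dots> = runit ?A (tens ?A unitC f u)" using runit_props(2)[OF A f] u0 by simp
        finally show "eM (toE C) a a b (tmap ?A unitC ?A ?B (idm ?A) (\<lambda>_. dId C a) (tens ?A unitC f u))
            = runit ?A (tens ?A unitC f u)" .
      qed
    qed
    subgoal premises prems for a b c t
    proof (cases "a \<in> dOb C \<and> b \<in> dOb C \<and> c \<in> dOb C")
      case True
      then have a: "a \<in> dOb C" and b: "b \<in> dOb C" and c: "c \<in> dOb C" by simp_all
      have "t \<notin> carr (tensor (dhom C b c) (dhom C a b))" using prems True by simp
      then show ?thesis unfolding toE_M[OF a b c]
        using lift_props(1)[OF H[OF b c] H[OF a b] H[OF a c] dcatD7[OF C a b c]]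
        by (simp add: extensional_def)
    next
      case False
      then show ?thesis by (auto simp: toE_def)
    qed
    subgoal for a using dcatD9[OF C, of a] by simp
    done
qed


lemma dcat_Mt:
  assumes C: "is_dcat C"
    and that: "a \<in> dOb C" "b \<in> dOb C" "c \<in> dOb C" "g \<in> dHom C b c" "f \<in> dHom C a b"
  shows "eM (toE C) a b c (tens (dhom C b c) (dhom C a b) g f) = dComp C a b c g f"
  unfolding toE_M[OF that(1-3)]
  by (rule lift_props(3)[OF dcatD1[OF C that(2,3)] dcatD1[OF C that(1,2)] dcatD1[OF C that(1,3)] dcatD7[OF C that(1-3)]])
     (simp_all add: that)

lemma toD_toE:
  assumes C: "is_dcat C"
  shows "toD (toE C) = C"
proof (rule dcat.equality)
  show "dComp (toD (toE C)) = dComp C"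
  proof (intro ext)
    fix a b c g f
    show "dComp (toD (toE C)) a b c g f = dComp C a b c g f"
    proof (cases "a \<in> dOb C \<and> b \<in> dOb C \<and> c \<in> dOb C \<and> g \<in> dHom C b c \<and> f \<in> dHom C a b")
      case True
      then show ?thesis using dcat_Mt[OF C] by (simp add: toD_comp)
    next
      case False
      then show ?thesis using dcatD8[OF C False] unfolding toD_def by auto
    qed
  qed
qed (simp_all add: toD_def)

lemma toE_toD:
  assumes E: "is_ecat E"
  shows "toE (toD E) = E"
proof (rule ecat.equality)
  show "eM (toE (toD E)) = eM E"
  proof (intro ext)
    fix a b c t
    show "eM (toE (toD E)) a b c t = eM E a b c t"
    proof (cases "a \<in> eOb E \<and> b \<in> eOb E \<and> c \<in> eOb E")
      case True
      then have a: "a \<in> eOb E" and b: "b \<in> eOb E" and c: "c \<in> eOb E" by simp_all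
      note H = ecatD1[OF E]
      have bc: "biconvex (ehom E b c) (ehom E a b) (ehom E a c) (dComp (toD E) a b c)"
        using dcatD7[OF ecat_to_dcat[OF E], of a b c] a b c by simp
      have ext: "eM E a b c \<in> extensional (carr (tensor (ehom E b c) (ehom E a b)))"
        unfolding extensional_def using ecatD7[OF E] by blast
      have "lift (ehom E b c) (ehom E a b) (ehom E a c) (dComp (toD E) a b c) = eM E a b c"
        by (rule lift_eqI[OF H[OF b c] H[OF a b] H[OF a c] bc ecatD2[OF E a b c] _ ext])
           (simp add: toD_comp a b c)
      then show ?thesis using a b c by (simp add: toE_M)
    next
      case False
      then show ?thesis using ecatD7[OF E, of a b c t] by (auto simp: toE_def)
    qed
  qed
  show "eJ (toE (toD E)) = eJ E"
  proof (intro ext)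
    fix a and u :: unit
    show "eJ (toE (toD E)) a u = eJ E a u" by (cases u) simp
  qed
qed (simp_all add: toE_def)

lemma efun_to_dfun:
  assumes E: "is_ecat E" and E': "is_ecat E'" and F: "is_efun E E' Fo Fh"
  shows "is_dfun (toD E) (toD E') Fo Fh"
  apply (rule dfunI)
        apply (simp_all only: toD_simps dhom_toD)
  subgoal for a by (rule efunD1[OF F])
  subgoal for a b f using cm_in[OF efunD2[OF F], of a b f] by simp
  subgoal premises prems for a b c g f
  proof -
    have a: "a \<in> eOb E" and b: "b \<in> eOb E" and c: "c \<in> eOb E" and g: "g \<in> eHom E b c" and f: "f \<in> eHom E a b"
      using prems by simp_all
    note H = ecatD1[OF E] and H' = ecatD1[OF E']
    have Fa: "Fo a \<in> eOb E'" and Fb: "Fo b \<in> eOb E'" and Fc: "Fo c \<in> eOb E'"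
      using efunD1[OF F] a b c by simp_all
    have Fg: "Fh b c g \<in> eHom E' (Fo b) (Fo c)" using cm_in[OF efunD2[OF F b c], of g] g by simp
    have Ff: "Fh a b f \<in> eHom E' (Fo a) (Fo b)" using cm_in[OF efunD2[OF F a b], of f] f by simp
    have t: "tens (ehom E b c) (ehom E a b) g f \<in> carr (tensor (ehom E b c) (ehom E a b))"
      by (rule tens_in[OF H[OF b c] H[OF a b]]) (simp_all add: f g)
    have "Fh a c (eM E a b c (tens (ehom E b c) (ehom E a b) g f))
        = eM E' (Fo a) (Fo b) (Fo c) (tens (ehom E' (Fo b) (Fo c)) (ehom E' (Fo a) (Fo b)) (Fh b c g) (Fh a b f))"
      using efunD3[OF F a b c t]
        tmap_props(3)[OF H[OF b c] H[OF a b] H'[OF Fb Fc] H'[OF Fa Fb] efunD2[OF F b c] efunD2[OF F a b], of g f] f g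
      by simp
    then show ?thesis using a b c f g Fa Fb Fc Fg Ff by (simp add: toD_comp)
  qed
  subgoal for a by (rule efunD4[OF F])
  subgoal for a b by (rule efunD2[OF F])
  subgoal for a by (rule efunD5[OF F])
  subgoal for a b f by (rule efunD6[OF F])
  done

lemma dfun_to_efun:
  assumes E: "is_ecat E" and E': "is_ecat E'" and F: "is_dfun (toD E) (toD E') Fo Fh"
  shows "is_efun E E' Fo Fh"
proof (rule efunI)
  note H = ecatD1[OF E] and H' = ecatD1[OF E'] and M = ecatD2[OF E] and M' = ecatD2[OF E']
  have Fo: "Fo a \<in> eOb E'" if "a \<in> eOb E" for a using dfunD1[OF F, of a] that by simp
  have Fcm: "convex_map (ehom E a b) (ehom E' (Fo a) (Fo b)) (Fh a b)" if "a \<in> eOb E" "b \<in> eOb E" for a b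
    using dfunD5[OF F, of a b] that by simp
  show "\<And>a. a \<in> eOb E \<Longrightarrow> Fo a \<in> eOb E'" by (rule Fo)
  show "\<And>a b. a \<in> eOb E \<Longrightarrow> b \<in> eOb E \<Longrightarrow> convex_map (ehom E a b) (ehom E' (Fo a) (Fo b)) (Fh a b)"
    by (rule Fcm)
  show "\<And>a. a \<in> eOb E \<Longrightarrow> Fh a a (eJ E a ()) = eJ E' (Fo a) ()"
    using dfunD4[OF F] by simp
  show "\<And>a. a \<notin> eOb E \<Longrightarrow> Fo a = undefined" using dfunD6[OF F] by simp
  show "\<And>a b f. \<not> (a \<in> eOb E \<and> b \<in> eOb E \<and> f \<in> eHom E a b) \<Longrightarrow> Fh a b f = undefined"
    using dfunD7[OF F] by simp
  fix a b c t assume a: "a \<in> eOb E" and b: "b \<in> eOb E" and c: "c \<in> eOb E"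
    and t: "t \<in> carr (tensor (ehom E b c) (ehom E a b))"
  have Fa: "Fo a \<in> eOb E'" and Fb: "Fo b \<in> eOb E'" and Fc: "Fo c \<in> eOb E'" using Fo a b c by simp_all
  note TP = tmap_props[OF H[OF b c] H[OF a b] H'[OF Fb Fc] H'[OF Fa Fb] Fcm[OF b c] Fcm[OF a b]]
  show "Fh a c (eM E a b c t)
       = eM E' (Fo a) (Fo b) (Fo c)
           (tmap (ehom E b c) (ehom E a b) (ehom E' (Fo b) (Fo c)) (ehom E' (Fo a) (Fo b))
                 (Fh b c) (Fh a b) t)"
  proof (rule tensor_unique[OF H[OF b c] H[OF a b] cm_comp[OF M[OF a b c] Fcm[OF a c]] cm_comp[OF TP(2) M'[OF Fa Fb Fc]] _ t])
    fix g f assume g: "g \<in> carr (ehom E b c)" and f: "f \<in> carr (ehom E a b)"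
    have gE: "g \<in> eHom E b c" and fE: "f \<in> eHom E a b" using f g by simp_all
    have Fg: "Fh b c g \<in> eHom E' (Fo b) (Fo c)" using cm_in[OF Fcm[OF b c] g] by simp
    have Ff: "Fh a b f \<in> eHom E' (Fo a) (Fo b)" using cm_in[OF Fcm[OF a b] f] by simp
    have "Fh a c (dComp (toD E) a b c g f) = dComp (toD E') (Fo a) (Fo b) (Fo c) (Fh b c g) (Fh a b f)"
      using dfunD3[OF F, of a b c g f] a b c gE fE by simp
    then show "Fh a c (eM E a b c (tens (ehom E b c) (ehom E a b) g f))
        = eM E' (Fo a) (Fo b) (Fo c) (tmap (ehom E b c) (ehom E a b) (ehom E' (Fo b) (Fo c)) (ehom E' (Fo a) (Fo b))
                 (Fh b c) (Fh a b) (tens (ehom E b c) (ehom E a b) g f))"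
      using TP(3)[OF g f] a b c gE fE Fa Fb Fc Fg Ff by (simp add: toD_comp)
  qed
qed

theorem mainTheorem4:
  shows "cat_iso (CSetCat :: (('o, 'h) ecat, _) bigcat) (CatD :: (('o, 'h) dcat, _) bigcat)"
proof -
  define FA where "FA = (\<lambda>(E :: ('o, 'h) ecat, Fo :: 'o \<Rightarrow> 'o, Fh :: 'o \<Rightarrow> 'o \<Rightarrow> 'h \<Rightarrow> 'h, E' :: ('o, 'h) ecat).
      (toD E, Fo, Fh, toD E'))"
  define GA where "GA = (\<lambda>(C :: ('o, 'h) dcat, Fo :: 'o \<Rightarrow> 'o, Fh :: 'o \<Rightarrow> 'o \<Rightarrow> 'h \<Rightarrow> 'h, C' :: ('o, 'h) dcat).
      (toE C, Fo, Fh, toE C'))"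
  have F: "is_functor (CSetCat :: (('o, 'h) ecat, _) bigcat) (CatD :: (('o, 'h) dcat, _) bigcat) toD FA"
    unfolding is_functor_def
  proof (intro conjI ballI impI)
    fix E :: "('o, 'h) ecat" assume "E \<in> cOb CSetCat"
    then show "toD E \<in> cOb CatD" by (simp add: CSetCat_def CatD_def ecat_to_dcat)
  next
    fix f :: "('o, 'h) ecat \<times> ('o \<Rightarrow> 'o) \<times> ('o \<Rightarrow> 'o \<Rightarrow> 'h \<Rightarrow> 'h) \<times> ('o, 'h) ecat"
    assume "f \<in> cAr CSetCat"
    then obtain E Fo Fh E' where f: "f = (E, Fo, Fh, E')" and E: "is_ecat E" and E': "is_ecat E'"
      and Fe: "is_efun E E' Fo Fh" by (auto simp: CSetCat_def)
    show "FA f \<in> cAr CatD" using ecat_to_dcat[OF E] ecat_to_dcat[OF E'] efun_to_dfun[OF E E' Fe]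
      by (simp add: f FA_def CatD_def)
    show "cDom CatD (FA f) = toD (cDom CSetCat f)" by (simp add: f FA_def CatD_def CSetCat_def)
    show "cCod CatD (FA f) = toD (cCod CSetCat f)" by (simp add: f FA_def CatD_def CSetCat_def)
  next
    fix E :: "('o, 'h) ecat" assume "E \<in> cOb CSetCat"
    show "FA (cId CSetCat E) = cId CatD (toD E)" by (simp add: FA_def CatD_def CSetCat_def)
  next
    fix f g :: "('o, 'h) ecat \<times> ('o \<Rightarrow> 'o) \<times> ('o \<Rightarrow> 'o \<Rightarrow> 'h \<Rightarrow> 'h) \<times> ('o, 'h) ecat"
    show "FA (cComp CSetCat g f) = cComp CatD (FA g) (FA f)"
      by (cases f, cases g) (simp add: FA_def CatD_def CSetCat_def)
  qed
  have G: "is_functor (CatD :: (('o, 'h) dcat, _) bigcat) (CSetCat :: (('o, 'h) ecat, _) bigcat) toE GA"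
    unfolding is_functor_def
  proof (intro conjI ballI impI)
    fix C :: "('o, 'h) dcat" assume "C \<in> cOb CatD"
    then show "toE C \<in> cOb CSetCat" by (simp add: CSetCat_def CatD_def dcat_to_ecat)
  next
    fix f :: "('o, 'h) dcat \<times> ('o \<Rightarrow> 'o) \<times> ('o \<Rightarrow> 'o \<Rightarrow> 'h \<Rightarrow> 'h) \<times> ('o, 'h) dcat"
    assume "f \<in> cAr CatD"
    then obtain C Fo Fh C' where f: "f = (C, Fo, Fh, C')" and C: "is_dcat C" and C': "is_dcat C'"
      and Fd: "is_dfun C C' Fo Fh" by (auto simp: CatD_def)
    have "is_efun (toE C) (toE C') Fo Fh"
      using dfun_to_efun[OF dcat_to_ecat[OF C] dcat_to_ecat[OF C']] Fd toD_toE[OF C] toD_toE[OF C'] by simp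
    then show "GA f \<in> cAr CSetCat" using dcat_to_ecat[OF C] dcat_to_ecat[OF C']
      by (simp add: f GA_def CSetCat_def)
    show "cDom CSetCat (GA f) = toE (cDom CatD f)" by (simp add: f GA_def CatD_def CSetCat_def)
    show "cCod CSetCat (GA f) = toE (cCod CatD f)" by (simp add: f GA_def CatD_def CSetCat_def)
  next
    fix C :: "('o, 'h) dcat" assume "C \<in> cOb CatD"
    show "GA (cId CatD C) = cId CSetCat (toE C)" by (simp add: GA_def CatD_def CSetCat_def)
  next
    fix f g :: "('o, 'h) dcat \<times> ('o \<Rightarrow> 'o) \<times> ('o \<Rightarrow> 'o \<Rightarrow> 'h \<Rightarrow> 'h) \<times> ('o, 'h) dcat"
    show "GA (cComp CatD g f) = cComp CSetCat (GA g) (GA f)"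
      by (cases f, cases g) (simp add: GA_def CatD_def CSetCat_def)
  qed
  have i1: "\<forall>x\<in>cOb (CSetCat :: (('o, 'h) ecat, _) bigcat). toE (toD x) = x"
    by (simp add: CSetCat_def toE_toD)
  have i2: "\<forall>f\<in>cAr (CSetCat :: (('o, 'h) ecat, _) bigcat). GA (FA f) = f"
    by (auto simp: CSetCat_def FA_def GA_def toE_toD)
  have i3: "\<forall>y\<in>cOb (CatD :: (('o, 'h) dcat, _) bigcat). toD (toE y) = y"
    by (simp add: CatD_def toD_toE)
  have i4: "\<forall>g\<in>cAr (CatD :: (('o, 'h) dcat, _) bigcat). FA (GA g) = g"
    by (auto simp: CatD_def FA_def GA_def toD_toE)
  show ?thesis unfolding cat_iso_def using F G i1 i2 i3 i4 by blast
qed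

end
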